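(* Let $D\in\{D_1,D_2,\dots,D_8\}$. For every positive integer $v$ with $v\equiv 0\pmod{14}$, there exists a $D$-decomposition of $K^*_v$.
   Context: $K^*_v$ denotes the complete symmetric digraph of order $v$: it contains both arcs $(x,y)$ and $(y,x)$ for every pair of distinct vertices $x,y$. A $D$-decomposition of a digraph $K$ is a set of subdigraphs of $K$, each isomorphic to $D$, such that every arc of $K$ lies in exactly one of them. For distinct vertices $v_0,\dots,v_6$, the digraphs $D_i[v_0,v_1,\dots,v_6]$ ($i\in[1,8]$) all have vertex set $\{v_0,\dots,v_6\}$ and the following arc sets: $D_1$: $(v_1,v_0),(v_1,v_2),(v_2,v_3),(v_3,v_4),(v_4,v_5),(v_5,v_6),(v_6,v_0)$; $D_2$: $(v_1,v_0),(v_2,v_1),(v_2,v_3),(v_3,v_4),(v_4,v_5),(v_5,v_6),(v_6,v_0)$; $D_3$: $(v_1,v_0),(v_1,v_2),(v_3,v_2),(v_3,v_4),(v_4,v_5),(v_5,v_6),(v_6,v_0)$; $D_4$: $(v_1,v_0),(v_1,v_2),(v_2,v_3),(v_4,v_3),(v_4,v_5),(v_5,v_6),(v_6,v_0)$; $D_5$: $(v_1,v_0),(v_2,v_1),(v_3,v_2),(v_3,v_4),(v_4,v_5),(v_5,v_6),(v_6,v_0)$; $D_6$: $(v_1,v_0),(v_2,v_1),(v_2,v_3),(v_3,v_4),(v_5,v_4),(v_5,v_6),(v_6,v_0)$; $D_7$: $(v_1,v_0),(v_1,v_2),(v_3,v_2),(v_3,v_4),(v_4,v_5),(v_6,v_5),(v_6,v_0)$;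 $D_8$: $(v_1,v_0),(v_2,v_1),(v_2,v_3),(v_4,v_3),(v_4,v_5),(v_5,v_6),(v_6,v_0)$. $D_i$ also denotes the isomorphism type of $D_i[v_0,\dots,v_6]$. *)

theory Defs
  imports Main
begin

definition complete_sym_digraph :: "'a set \<Rightarrow> ('a \<times> 'a) set" where
  "complete_sym_digraph V = {(x, y). x \<in> V \<and> y \<in> V \<and> x \<noteq> y}"

text \<open>The digraphs D_1..D_8 as arc lists on the index set {0..6}
  (index j stands for vertex v_j).\<close>
fun D_pattern :: "nat \<Rightarrow> (nat \<times> nat) list" where
  "D_pattern (Suc 0) = [(1,0),(1,2),(2,3),(3,4),(4,5),(5,6),(6,0)]"
| "D_pattern (Suc (Suc 0)) = [(1,0),(2,1),(2,3),(3,4),(4,5),(5,6),(6,0)]"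
| "D_pattern (Suc (Suc (Suc 0))) = [(1,0),(1,2),(3,2),(3,4),(4,5),(5,6),(6,0)]"
| "D_pattern (Suc (Suc (Suc (Suc 0)))) = [(1,0),(1,2),(2,3),(4,3),(4,5),(5,6),(6,0)]"
| "D_pattern (Suc (Suc (Suc (Suc (Suc 0))))) = [(1,0),(2,1),(3,2),(3,4),(4,5),(5,6),(6,0)]"
| "D_pattern (Suc (Suc (Suc (Suc (Suc (Suc 0)))))) = [(1,0),(2,1),(2,3),(3,4),(5,4),(5,6),(6,0)]"
| "D_pattern (Suc (Suc (Suc (Suc (Suc (Suc (Suc 0))))))) = [(1,0),(1,2),(3,2),(3,4),(4,5),(6,5),(6,0)]"
| "D_pattern (Suc (Suc (Suc (Suc (Suc (Suc (Suc (Suc 0)))))))) = [(1,0),(2,1),(2,3),(4,3),(4,5),(5,6),(6,0)]"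
| "D_pattern _ = []"

definition D_copy :: "nat \<Rightarrow> (nat \<Rightarrow> 'a) \<Rightarrow> ('a \<times> 'a) set" where
  "D_copy i f = (\<lambda>(a, b). (f a, f b)) ` set (D_pattern i)"

text \<open>A subdigraph of K*_V isomorphic to D_i, given by its arc set (D_i has no
  isolated vertices, so the arc set determines the subdigraph): the image of
  D_i under an injective labelling of v_0..v_6 by distinct vertices of V.\<close>
definition is_D_copy_in :: "nat \<Rightarrow> 'a set \<Rightarrow> ('a \<times> 'a) set \<Rightarrow> bool" where
  "is_D_copy_in i V B \<longleftrightarrow>
     (\<exists>f. inj_on f {0..6::nat} \<and> f ` {0..6} \<subseteq> V \<and> B = D_copy i f)"

definition is_D_decomposition :: "nat \<Rightarrow> 'a set \<Rightarrow> ('a \<times> 'a) set set \<Rightarrow> bool" where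
  "is_D_decomposition i V \<D> \<longleftrightarrow>
     (\<forall>B\<in>\<D>. is_D_copy_in i V B) \<and>
     (\<forall>e\<in>complete_sym_digraph V. \<exists>!B. B \<in> \<D> \<and> e \<in> B) \<and>
     \<Union>\<D> \<subseteq> complete_sym_digraph V"

end

theory Submission
  imports Defs
begin

lemma mod_cancel_int: "((a::int) + c) mod n = (b + c) mod n \<longleftrightarrow> a mod n = b mod n"
  by (simp add: mod_eq_dvd_iff)

lemma small_mod_eq: fixes x y :: int
  assumes "x mod n = y mod n" "2*\<bar>x\<bar> < n" "2*\<bar>y\<bar> < n"
  shows "x = y"
proof -
  have "n dvd x - y" using assms(1) by (simp add: mod_eq_dvd_iff)
  then obtain c where c: "x - y = n * c" by (auto simp: dvd_def)
  have n0: "n > 0" using assms by linarith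
  have lt: "\<bar>n * c\<bar> < n" using assms c by linarith
  show ?thesis
  proof (cases "c = 0")
    case True thus ?thesis using c by simp
  next
    case False
    hence "\<bar>c\<bar> \<ge> 1" by linarith
    hence "n * \<bar>c\<bar> \<ge> n" using n0 by (simp add: mult_le_cancel_left1)
    hence False using lt n0 by (simp add: abs_mult)
    thus ?thesis ..
  qed
qed

lemma int_mod_eq_lt: "int a mod int n = int b mod int n \<Longrightarrow> a < n \<Longrightarrow> b < n \<Longrightarrow> a = b"
  by (metis mod_less of_nat_eq_iff zmod_int)

lemma mem_D_copy: "e \<in> D_copy i f \<longleftrightarrow> (\<exists>(a,b)\<in>set (D_pattern i). e = (f a, f b))"
  unfolding D_copy_def by auto

definition Fdev :: "nat \<Rightarrow> (nat \<Rightarrow> int) \<Rightarrow> bool \<Rightarrow> nat \<Rightarrow> nat \<Rightarrow> nat \<Rightarrow> nat" where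
  "Fdev n p isinf m s j = (if isinf \<and> j = m then n else nat ((p j + int s) mod int n))"

locale frame =
  fixes i n :: nat and I :: "'x set" and inf :: 'x and m :: nat
    and pos :: "'x \<Rightarrow> nat \<Rightarrow> int" and sv :: "'x \<Rightarrow> nat \<times> nat \<Rightarrow> int"
    and A :: "('x \<times> (nat \<times> nat)) set"
  assumes n1: "n \<ge> 1"
  and Lsub: "\<And>a b. (a,b) \<in> set (D_pattern i) \<Longrightarrow> a \<le> 6 \<and> b \<le> 6 \<and> a \<noteq> b"
  and infI: "inf \<in> I" and m6: "m \<le> 6"
  and mo: "\<exists>!b. (m,b) \<in> set (D_pattern i)" and mi: "\<exists>!a. (a,m) \<in> set (D_pattern i)"
  and finI: "finite I"
  and injp: "\<And>\<beta>. \<beta> \<in> I \<Longrightarrow> \<beta> \<noteq> inf \<Longrightarrow> inj_on (\<lambda>j. pos \<beta> j mod int n) {0..6}"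
  and injq: "inj_on (\<lambda>j. pos inf j mod int n) ({0..6} - {m})"
  and A_def: "A = (I - {inf}) \<times> set (D_pattern i) \<union>
                  {inf} \<times> {(a,b). (a,b) \<in> set (D_pattern i) \<and> a \<noteq> m \<and> b \<noteq> m}"
  and svmod: "\<And>\<beta> a b. (\<beta>,(a,b)) \<in> A \<Longrightarrow> (pos \<beta> b - pos \<beta> a) mod int n = sv \<beta> (a,b) mod int n"
  and svnz: "\<And>\<beta> ab. (\<beta>,ab) \<in> A \<Longrightarrow> sv \<beta> ab \<noteq> 0"
  and svsmall: "\<And>\<beta> ab. (\<beta>,ab) \<in> A \<Longrightarrow> 2 * \<bar>sv \<beta> ab\<bar> < int n"
  and svinj: "inj_on (\<lambda>(\<beta>,ab). sv \<beta> ab) A"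
  and cardA: "card A = n - 1"
begin

definition F where "F \<beta> s = Fdev n (pos \<beta>) (\<beta> = inf) m s"

definition DD where "DD = (\<lambda>(\<beta>,s). D_copy i (F \<beta> s)) ` (I \<times> {0..<n})"

lemma F_norm: "\<beta> \<noteq> inf \<or> j \<noteq> m \<Longrightarrow> int (F \<beta> s j) = (pos \<beta> j + int s) mod int n"
  using n1 unfolding F_def Fdev_def by auto

lemma F_lt: "\<beta> \<noteq> inf \<or> j \<noteq> m \<Longrightarrow> F \<beta> s j < n"
proof -
  assume h: "\<beta> \<noteq> inf \<or> j \<noteq> m"
  have "(pos \<beta> j + int s) mod int n < int n" using n1 by simp
  thus ?thesis using F_norm[OF h, of s] by linarith
qed

lemma F_inf: "F inf s m = n" unfolding F_def Fdev_def by simp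

lemma F_eq_n: "F \<beta> s j = n \<longleftrightarrow> \<beta> = inf \<and> j = m"
  using F_lt F_inf by (metis less_irrefl)

lemma F_inj: "inj_on (F \<beta> s) {0..6}" if "\<beta> \<in> I"
proof (rule inj_onI)
  fix x y assume x: "x \<in> {0..6}" and y: "y \<in> {0..6}" and e: "F \<beta> s x = F \<beta> s y"
  show "x = y"
  proof (cases "\<beta> = inf")
    case True
    show ?thesis
    proof (cases "x = m \<or> y = m")
      case True
      then show ?thesis using e F_eq_n \<open>\<beta> = inf\<close> by metis
    next
      case False
      hence "(pos \<beta> x + int s) mod int n = (pos \<beta> y + int s) mod int n"
        using e F_norm by metis
      hence "pos \<beta> x mod int n = pos \<beta> y mod int n" by (simp add: mod_cancel_int)
      thus ?thesis using injq False x y \<open>\<beta> = inf\<close> by (auto dest: inj_onD)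
    qed
  next
    case False
    hence "(pos \<beta> x + int s) mod int n = (pos \<beta> y + int s) mod int n"
      using e F_norm by metis
    hence "pos \<beta> x mod int n = pos \<beta> y mod int n" by (simp add: mod_cancel_int)
    thus ?thesis using injp[OF that False] x y by (auto dest: inj_onD)
  qed
qed

lemma F_range: "F \<beta> s j \<in> {0..<Suc n}"
  using F_lt F_inf by (cases "\<beta> = inf \<and> j = m") (auto simp: less_Suc_eq)

definition h where "h z = sv (fst z) (snd z) mod int n"

lemma h_inj: "inj_on h A"
proof (rule inj_onI)
  fix z w assume z: "z \<in> A" and w: "w \<in> A" and e: "h z = h w"
  obtain \<beta> ab where zz: "z = (\<beta>,ab)" by (cases z)
  obtain \<beta>' ab' where ww: "w = (\<beta>',ab')" by (cases w)
  have "sv \<beta> ab = sv \<beta>' ab'"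
    using small_mod_eq[of "sv \<beta> ab" "int n" "sv \<beta>' ab'"] e svsmall z w zz ww unfolding h_def by auto
  hence "(\<lambda>(\<beta>,ab). sv \<beta> ab) z = (\<lambda>(\<beta>,ab). sv \<beta> ab) w" using zz ww by simp
  thus "z = w" using inj_onD[OF svinj] z w by blast
qed

lemma finA: "finite A"
proof -
  have "finite {(a,b). (a,b) \<in> set (D_pattern i) \<and> a \<noteq> m \<and> b \<noteq> m}"
    by (rule finite_subset[of _ "set (D_pattern i)"]) auto
  thus ?thesis using finI unfolding A_def by auto
qed

lemma h_img: "h ` A = {1..<int n}"
proof (rule card_subset_eq)
  show "finite {1..<int n}" by simp
  show "h ` A \<subseteq> {1..<int n}"
  proof
    fix r assume "r \<in> h ` A"
    then obtain \<beta> ab where z: "(\<beta>,ab) \<in> A" and r: "r = sv \<beta> ab mod int n" unfolding h_def by auto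
    have "r \<ge> 0" "r < int n" using r n1 by auto
    moreover have "r \<noteq> 0"
    proof
      assume "r = 0"
      hence "sv \<beta> ab mod int n = 0 mod int n" using r by simp
      hence "sv \<beta> ab = 0" using small_mod_eq[of "sv \<beta> ab" "int n" 0] svsmall[OF z] n1 by simp
      thus False using svnz[OF z] by simp
    qed
    ultimately show "r \<in> {1..<int n}" by auto
  qed
  show "card (h ` A) = card {1..<int n}"
    using card_image[OF h_inj] cardA n1 by simp
qed

lemma arc_fin: "(x,y) \<in> D_copy i (F \<beta> s) \<Longrightarrow> x < n \<Longrightarrow> y < n \<Longrightarrow> \<beta> \<in> I \<Longrightarrow>
   \<exists>a b. (\<beta>,(a,b)) \<in> A \<and> int x = (pos \<beta> a + int s) mod int n \<and> int y = (pos \<beta> b + int s) mod int n"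
proof -
  assume e: "(x,y) \<in> D_copy i (F \<beta> s)" and x: "x < n" and y: "y < n" and b: "\<beta> \<in> I"
  then obtain a b where ab: "(a,b) \<in> set (D_pattern i)" and xy: "x = F \<beta> s a" "y = F \<beta> s b"
    unfolding mem_D_copy by auto
  have na: "\<beta> \<noteq> inf \<or> a \<noteq> m" using x xy by (auto simp: F_inf)
  have nb: "\<beta> \<noteq> inf \<or> b \<noteq> m" using y xy by (auto simp: F_inf)
  have "(\<beta>,(a,b)) \<in> A" using ab na nb b unfolding A_def by auto
  thus ?thesis using F_norm[OF na] F_norm[OF nb] xy by blast
qed

lemma decomp: "is_D_decomposition i {0..<Suc n} DD"
  unfolding is_D_decomposition_def
proof (intro conjI ballI)
  fix B assume "B \<in> DD"
  then obtain \<beta> s where bs: "\<beta> \<in> I" "B = D_copy i (F \<beta> s)" unfolding DD_def by auto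
  show "is_D_copy_in i {0..<Suc n} B"
    unfolding is_D_copy_in_def using F_inj[OF bs(1)] F_range bs by blast
next
  show "\<Union>DD \<subseteq> complete_sym_digraph {0..<Suc n}"
  proof
    fix e assume "e \<in> \<Union>DD"
    then obtain \<beta> s where bs: "\<beta> \<in> I" "e \<in> D_copy i (F \<beta> s)" unfolding DD_def by auto
    then obtain a b where ab: "(a,b) \<in> set (D_pattern i)" "e = (F \<beta> s a, F \<beta> s b)"
      unfolding mem_D_copy by auto
    have "F \<beta> s a \<noteq> F \<beta> s b" using F_inj[OF bs(1), of s] Lsub[OF ab(1)] by (auto dest: inj_onD)
    thus "e \<in> complete_sym_digraph {0..<Suc n}" using ab F_range unfolding complete_sym_digraph_def by auto
  qed
next
  fix e assume e: "e \<in> complete_sym_digraph {0..<Suc n}"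
  obtain x y where exy: "e = (x,y)" by (cases e)
  have xy: "x \<le> n" "y \<le> n" "x \<noteq> y" using e exy unfolding complete_sym_digraph_def by auto
  show "\<exists>!B. B \<in> DD \<and> e \<in> B"
  proof (cases "x = n")
    case True
    hence yn: "y < n" using xy by auto
    obtain b0 where b0: "(m,b0) \<in> set (D_pattern i)" using mo by auto
    have b0m: "b0 \<noteq> m" using Lsub[OF b0] by auto
    define s where "s = nat ((int y - pos inf b0) mod int n)"
    have s_lt: "s < n" using n1 unfolding s_def by (simp add: nat_less_iff)
    have "int (F inf s b0) = (pos inf b0 + int s) mod int n" using F_norm b0m by auto
    also have "\<dots> = int y" using n1 yn unfolding s_def by (simp add: mod_add_right_eq)
    finally have Fb: "F inf s b0 = y" by simp
    have ex1: "D_copy i (F inf s) \<in> DD" unfolding DD_def using infI s_lt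
      by (auto intro!: image_eqI[where x="(inf,s)"])
    have ex2: "e \<in> D_copy i (F inf s)" unfolding mem_D_copy exy using b0 Fb F_inf True
      by (intro bexI[of _ "(m,b0)"]) auto
    have ex: "D_copy i (F inf s) \<in> DD \<and> e \<in> D_copy i (F inf s)" using ex1 ex2 by blast
    show ?thesis
    proof (rule ex1I[where a="D_copy i (F inf s)"])
      show "D_copy i (F inf s) \<in> DD \<and> e \<in> D_copy i (F inf s)" using ex .
    next
      fix B assume B: "B \<in> DD \<and> e \<in> B"
      then obtain \<beta> s' where bs: "\<beta> \<in> I" "s' < n" "B = D_copy i (F \<beta> s')" unfolding DD_def by auto
      then obtain a b where ab: "(a,b) \<in> set (D_pattern i)" "x = F \<beta> s' a" "y = F \<beta> s' b"
        using B bs exy by (auto simp: mem_D_copy)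
      have bi: "\<beta> = inf" "a = m" using F_eq_n[of \<beta> s' a] ab(2) True by auto
      have "b = b0" using mo b0 ab bi by auto
      have "int y = (pos inf b0 + int s') mod int n" using F_norm b0m ab bi \<open>b = b0\<close> by auto
      hence "int s' mod int n = int s mod int n"
        using Fb F_norm[of inf b0 s] b0m by (simp add: add.commute mod_cancel_int)
      hence "s' = s" using bs(2) s_lt by (rule int_mod_eq_lt)
      thus "B = D_copy i (F inf s)" using bs bi by simp
    qed
  next
    case xn: False
    show ?thesis
    proof (cases "y = n")
      case True
      hence x_lt: "x < n" using xy xn by auto
      obtain a0 where a0: "(a0,m) \<in> set (D_pattern i)" using mi by auto
      have a0m: "a0 \<noteq> m" using Lsub[OF a0] by auto
      define s where "s = nat ((int x - pos inf a0) mod int n)"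
      have s_lt: "s < n" using n1 unfolding s_def by (simp add: nat_less_iff)
      have "int (F inf s a0) = (pos inf a0 + int s) mod int n" using F_norm a0m by auto
      also have "\<dots> = int x" using n1 x_lt unfolding s_def by (simp add: mod_add_right_eq)
      finally have Fa: "F inf s a0 = x" by simp
      have ex1: "D_copy i (F inf s) \<in> DD" unfolding DD_def using infI s_lt
        by (auto intro!: image_eqI[where x="(inf,s)"])
      have ex2: "e \<in> D_copy i (F inf s)" unfolding mem_D_copy exy using a0 Fa F_inf True
        by (intro bexI[of _ "(a0,m)"]) auto
      have ex: "D_copy i (F inf s) \<in> DD \<and> e \<in> D_copy i (F inf s)" using ex1 ex2 by blast
      show ?thesis
      proof (rule ex1I[where a="D_copy i (F inf s)"])
        show "D_copy i (F inf s) \<in> DD \<and> e \<in> D_copy i (F inf s)" using ex .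
      next
        fix B assume B: "B \<in> DD \<and> e \<in> B"
        then obtain \<beta> s' where bs: "\<beta> \<in> I" "s' < n" "B = D_copy i (F \<beta> s')" unfolding DD_def by auto
        then obtain a b where ab: "(a,b) \<in> set (D_pattern i)" "x = F \<beta> s' a" "y = F \<beta> s' b"
          using B bs exy by (auto simp: mem_D_copy)
        have bi: "\<beta> = inf" "b = m" using F_eq_n[of \<beta> s' b] ab(3) True by auto
        have "a = a0" using mi a0 ab bi by auto
        have "int x = (pos inf a0 + int s') mod int n" using F_norm a0m ab bi \<open>a = a0\<close> by auto
        hence "int s' mod int n = int s mod int n"
          using Fa F_norm[of inf a0 s] a0m by (simp add: add.commute mod_cancel_int)
        hence "s' = s" using bs(2) s_lt by (rule int_mod_eq_lt)
        thus "B = D_copy i (F inf s)" using bs bi by simp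
      qed
    next
      case yn: False
      have x_lt: "x < n" and y_lt: "y < n" using xy xn yn by auto
      define r where "r = (int y - int x) mod int n"
      have rI: "r \<in> {1..<int n}"
      proof -
        have "r \<ge> 0" "r < int n" using n1 unfolding r_def by auto
        moreover have "r \<noteq> 0"
        proof
          assume "r = 0"
          hence "int y mod int n = int x mod int n" unfolding r_def by (simp add: mod_eq_dvd_iff dvd_eq_mod_eq_0)
          hence "int y = int x" using x_lt y_lt by simp
          thus False using xy by simp
        qed
        ultimately show ?thesis by auto
      qed
      obtain \<beta> a b where z: "(\<beta>,(a,b)) \<in> A" and hz: "sv \<beta> (a,b) mod int n = r"
      proof -
        obtain z where "z \<in> A" "h z = r" using h_img rI by (metis imageE)
        thus ?thesis using that unfolding h_def by (cases z) auto
      qed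
      have bI: "\<beta> \<in> I" and ab: "(a,b) \<in> set (D_pattern i)" and nam: "\<beta> \<noteq> inf \<or> a \<noteq> m" "\<beta> \<noteq> inf \<or> b \<noteq> m"
        using z infI unfolding A_def by auto
      define s where "s = nat ((int x - pos \<beta> a) mod int n)"
      have s_lt: "s < n" using n1 unfolding s_def by (simp add: nat_less_iff)
      have iss: "int s = (int x - pos \<beta> a) mod int n" using n1 unfolding s_def by simp
      have "int (F \<beta> s a) = (pos \<beta> a + int s) mod int n" using F_norm nam by auto
      also have "\<dots> = int x" using x_lt iss by (simp add: mod_add_right_eq)
      finally have Fa: "F \<beta> s a = x" by simp
      have "int (F \<beta> s b) = (pos \<beta> b + int s) mod int n" using F_norm nam by auto
      also have "\<dots> = ((pos \<beta> b - pos \<beta> a) + int x) mod int n" using iss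
        by (simp add: mod_add_right_eq algebra_simps)
      also have "\<dots> = ((pos \<beta> b - pos \<beta> a) mod int n + int x) mod int n" by (simp add: mod_add_left_eq)
      also have "\<dots> = (r + int x) mod int n" using svmod[OF z] hz by simp
      also have "\<dots> = int y" using y_lt unfolding r_def by (simp add: mod_add_left_eq)
      finally have Fb: "F \<beta> s b = y" by simp
      have ex1: "D_copy i (F \<beta> s) \<in> DD" unfolding DD_def using bI s_lt
        by (auto intro!: image_eqI[where x="(\<beta>,s)"])
      have ex2: "e \<in> D_copy i (F \<beta> s)" unfolding mem_D_copy exy using ab Fa Fb
        by (intro bexI[of _ "(a,b)"]) auto
      have ex: "D_copy i (F \<beta> s) \<in> DD \<and> e \<in> D_copy i (F \<beta> s)" using ex1 ex2 by blast
      show ?thesis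
      proof (rule ex1I[where a="D_copy i (F \<beta> s)"])
        show "D_copy i (F \<beta> s) \<in> DD \<and> e \<in> D_copy i (F \<beta> s)" using ex .
      next
        fix B assume B: "B \<in> DD \<and> e \<in> B"
        then obtain \<beta>' s' where bs: "\<beta>' \<in> I" "s' < n" "B = D_copy i (F \<beta>' s')" unfolding DD_def by auto
        obtain a' b' where z': "(\<beta>',(a',b')) \<in> A" and x': "int x = (pos \<beta>' a' + int s') mod int n"
            and y': "int y = (pos \<beta>' b' + int s') mod int n"
          using arc_fin[of x y \<beta>' s'] B bs exy x_lt y_lt by auto
        have "(pos \<beta>' b' - pos \<beta>' a') mod int n = r"
        proof -
          have "(pos \<beta>' b' - pos \<beta>' a') mod int n = ((pos \<beta>' b' + int s') - (pos \<beta>' a' + int s')) mod int n"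
            by simp
          also have "\<dots> = (int y - int x) mod int n" using x' y' by (simp add: mod_diff_eq)
          finally show ?thesis unfolding r_def .
        qed
        hence "h (\<beta>',(a',b')) = h (\<beta>,(a,b))" using svmod[OF z'] hz unfolding h_def by simp
        hence eqz: "(\<beta>',(a',b')) = (\<beta>,(a,b))" using h_inj z z' by (auto dest: inj_onD)
        have "(pos \<beta> a + int s') mod int n = (pos \<beta> a + int s) mod int n"
          using x' eqz F_norm[of \<beta> a s] nam Fa by auto
        hence "int s' mod int n = int s mod int n" by (simp add: add.commute mod_cancel_int)
        hence "s' = s" using bs(2) s_lt by (rule int_mod_eq_lt)
        thus "B = D_copy i (F \<beta> s)" using bs eqz by simp
      qed
    qed
  qed
qed

end


datatype idx = IInf | IX | IA nat | IB nat
definition Iset :: "nat \<Rightarrow> idx set" where "Iset T = {IInf, IX} \<union> IA ` {1..T} \<union> IB ` {1..T}"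
definition Jset :: "nat \<Rightarrow> (idx \<times> nat) set" where
  "Jset T = (Iset T - {IInf}) \<times> {..<7} \<union> {IInf} \<times> {..<5}"
definition valX :: "int list" where "valX = [1, -1, -2, 3, -3, 4, -4]"
definition valI :: "nat \<Rightarrow> int list" where "valI T = [2, 7 * int T + 5, -7 * int T - 5, 7 * int T + 6, -7 * int T - 6]"
lemma less7: "(q::nat) < 7 \<longleftrightarrow> q = 0 \<or> q = 1 \<or> q = 2 \<or> q = 3 \<or> q = 4 \<or> q = 5 \<or> q = 6" by auto
lemma less5: "(q::nat) < 5 \<longleftrightarrow> q = 0 \<or> q = 1 \<or> q = 2 \<or> q = 3 \<or> q = 4" by auto

definition valA6 :: "nat \<Rightarrow> nat \<Rightarrow> int list" where
  "valA6 T k = [(-2 * int k + 2 * int T + 5), (int k + 2 * int T + 4), (-int k - 2 * int T - 4), (int k + 3 * int T + 4), (int k + 4 * int T + 4), (int k + 5 * int T + 4), (int k + 6 * int T + 4)]"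

definition valB6 :: "nat \<Rightarrow> nat \<Rightarrow> int list" where
  "valB6 T k = [(-2 * int k - 3), (2 * int k + 4), (2 * int k - 2 * int T - 6), (-int k - 3 * int T - 4), (-int k - 4 * int T - 4), (-int k - 5 * int T - 4), (-int k - 6 * int T - 4)]"

lemma vi6_AA: "Suc 0 \<le> k \<Longrightarrow> k \<le> T \<Longrightarrow> Suc 0 \<le> k' \<Longrightarrow> k' \<le> T \<Longrightarrow> q < 7 \<Longrightarrow> q' < 7 \<Longrightarrow> (valA6 T k ! q = valA6 T k' ! q') = (k = k' \<and> q = q')"
  unfolding less7 less5 valA6_def valB6_def valX_def valI_def
  apply (elim disjE)
  apply (simp_all)
  apply (presburger+)?
  done

lemma vi6_AB: "Suc 0 \<le> k \<Longrightarrow> k \<le> T \<Longrightarrow> Suc 0 \<le> k' \<Longrightarrow> k' \<le> T \<Longrightarrow> q < 7 \<Longrightarrow> q' < 7 \<Longrightarrow> valA6 T k ! q \<noteq> valB6 T k' ! q'"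
  unfolding less7 less5 valA6_def valB6_def valX_def valI_def
  apply (elim disjE)
  apply (simp_all)
  apply (presburger+)?
  done

lemma vi6_AX: "Suc 0 \<le> k \<Longrightarrow> k \<le> T \<Longrightarrow> q < 7 \<Longrightarrow> q' < 7 \<Longrightarrow> valA6 T k ! q \<noteq> valX ! q'"
  unfolding less7 less5 valA6_def valB6_def valX_def valI_def
  apply (elim disjE)
  apply (simp_all)
  apply (presburger+)?
  done

lemma vi6_AI: "Suc 0 \<le> k \<Longrightarrow> k \<le> T \<Longrightarrow> q < 7 \<Longrightarrow> q' < 5 \<Longrightarrow> valA6 T k ! q \<noteq> valI T ! q'"
  unfolding less7 less5 valA6_def valB6_def valX_def valI_def
  apply (elim disjE)
  apply (simp_all)
  apply (presburger+)?
  done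

lemma vi6_BA: "Suc 0 \<le> k \<Longrightarrow> k \<le> T \<Longrightarrow> Suc 0 \<le> k' \<Longrightarrow> k' \<le> T \<Longrightarrow> q < 7 \<Longrightarrow> q' < 7 \<Longrightarrow> valB6 T k ! q \<noteq> valA6 T k' ! q'"
  unfolding less7 less5 valA6_def valB6_def valX_def valI_def
  apply (elim disjE)
  apply (simp_all)
  apply (presburger+)?
  done

lemma vi6_BB: "Suc 0 \<le> k \<Longrightarrow> k \<le> T \<Longrightarrow> Suc 0 \<le> k' \<Longrightarrow> k' \<le> T \<Longrightarrow> q < 7 \<Longrightarrow> q' < 7 \<Longrightarrow> (valB6 T k ! q = valB6 T k' ! q') = (k = k' \<and> q = q')"
  unfolding less7 less5 valA6_def valB6_def valX_def valI_def
  apply (elim disjE)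
  apply (simp_all)
  apply (presburger+)?
  done

lemma vi6_BX: "Suc 0 \<le> k \<Longrightarrow> k \<le> T \<Longrightarrow> q < 7 \<Longrightarrow> q' < 7 \<Longrightarrow> valB6 T k ! q \<noteq> valX ! q'"
  unfolding less7 less5 valA6_def valB6_def valX_def valI_def
  apply (elim disjE)
  apply (simp_all)
  apply (presburger+)?
  done

lemma vi6_BI: "Suc 0 \<le> k \<Longrightarrow> k \<le> T \<Longrightarrow> q < 7 \<Longrightarrow> q' < 5 \<Longrightarrow> valB6 T k ! q \<noteq> valI T ! q'"
  unfolding less7 less5 valA6_def valB6_def valX_def valI_def
  apply (elim disjE)
  apply (simp_all)
  apply (presburger+)?
  done

lemma vi6_XA: "Suc 0 \<le> k' \<Longrightarrow> k' \<le> T \<Longrightarrow> q < 7 \<Longrightarrow> q' < 7 \<Longrightarrow> valX ! q \<noteq> valA6 T k' ! q'"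
  unfolding less7 less5 valA6_def valB6_def valX_def valI_def
  apply (elim disjE)
  apply (simp_all)
  apply (presburger+)?
  done

lemma vi6_XB: "Suc 0 \<le> k' \<Longrightarrow> k' \<le> T \<Longrightarrow> q < 7 \<Longrightarrow> q' < 7 \<Longrightarrow> valX ! q \<noteq> valB6 T k' ! q'"
  unfolding less7 less5 valA6_def valB6_def valX_def valI_def
  apply (elim disjE)
  apply (simp_all)
  apply (presburger+)?
  done

lemma vi6_XX: "q < 7 \<Longrightarrow> q' < 7 \<Longrightarrow> (valX ! q = valX ! q') = (q = q')"
  unfolding less7 less5 valA6_def valB6_def valX_def valI_def
  apply (elim disjE)
  apply (simp_all)
  apply (presburger+)?
  done

lemma vi6_XI: "q < 7 \<Longrightarrow> q' < 5 \<Longrightarrow> valX ! q \<noteq> valI T ! q'"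
  unfolding less7 less5 valA6_def valB6_def valX_def valI_def
  apply (elim disjE)
  apply (simp_all)
  apply (presburger+)?
  done

lemma vi6_IA: "Suc 0 \<le> k' \<Longrightarrow> k' \<le> T \<Longrightarrow> q < 5 \<Longrightarrow> q' < 7 \<Longrightarrow> valI T ! q \<noteq> valA6 T k' ! q'"
  unfolding less7 less5 valA6_def valB6_def valX_def valI_def
  apply (elim disjE)
  apply (simp_all)
  apply (presburger+)?
  done

lemma vi6_IB: "Suc 0 \<le> k' \<Longrightarrow> k' \<le> T \<Longrightarrow> q < 5 \<Longrightarrow> q' < 7 \<Longrightarrow> valI T ! q \<noteq> valB6 T k' ! q'"
  unfolding less7 less5 valA6_def valB6_def valX_def valI_def
  apply (elim disjE)
  apply (simp_all)
  apply (presburger+)?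
  done

lemma vi6_IX: "q < 5 \<Longrightarrow> q' < 7 \<Longrightarrow> valI T ! q \<noteq> valX ! q'"
  unfolding less7 less5 valA6_def valB6_def valX_def valI_def
  apply (elim disjE)
  apply (simp_all)
  apply (presburger+)?
  done

lemma vi6_II: "q < 5 \<Longrightarrow> q' < 5 \<Longrightarrow> (valI T ! q = valI T ! q') = (q = q')"
  unfolding less7 less5 valA6_def valB6_def valX_def valI_def
  apply (elim disjE)
  apply (simp_all)
  apply (presburger+)?
  done

lemma vb6_A: "Suc 0 \<le> k \<Longrightarrow> k \<le> T \<Longrightarrow> q < 7 \<Longrightarrow> valA6 T k ! q \<noteq> 0 \<and> 2 * \<bar>valA6 T k ! q\<bar> < 14 * int T + 13"
  unfolding less7 less5 valA6_def valB6_def valX_def valI_def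
  apply (elim disjE)
  apply (simp_all)
  apply (presburger+)?
  done

lemma vb6_B: "Suc 0 \<le> k \<Longrightarrow> k \<le> T \<Longrightarrow> q < 7 \<Longrightarrow> valB6 T k ! q \<noteq> 0 \<and> 2 * \<bar>valB6 T k ! q\<bar> < 14 * int T + 13"
  unfolding less7 less5 valA6_def valB6_def valX_def valI_def
  apply (elim disjE)
  apply (simp_all)
  apply (presburger+)?
  done

lemma vb6_X: "q < 7 \<Longrightarrow> valX ! q \<noteq> 0 \<and> 2 * \<bar>valX ! q\<bar> < 14 * int T + 13"
  unfolding less7 less5 valA6_def valB6_def valX_def valI_def
  apply (elim disjE)
  apply (simp_all)
  apply (presburger+)?
  done

lemma vb6_I: "q < 5 \<Longrightarrow> valI T ! q \<noteq> 0 \<and> 2 * \<bar>valI T ! q\<bar> < 14 * int T + 13"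
  unfolding less7 less5 valA6_def valB6_def valX_def valI_def
  apply (elim disjE)
  apply (simp_all)
  apply (presburger+)?
  done

definition val6 :: "nat \<Rightarrow> idx \<Rightarrow> nat \<Rightarrow> int" where "val6 T \<beta> q = (case \<beta> of IA k \<Rightarrow> valA6 T k ! q | IB k \<Rightarrow> valB6 T k ! q | IX \<Rightarrow> valX ! q | IInf \<Rightarrow> valI T ! q)"

lemma val6_inj: "inj_on (\<lambda>(\<beta>,q). val6 T \<beta> q) (Jset T)"
proof (rule inj_onI)
  fix z w assume z: "z \<in> Jset T" and w: "w \<in> Jset T" and e: "(\<lambda>(\<beta>,q). val6 T \<beta> q) z = (\<lambda>(\<beta>,q). val6 T \<beta> q) w"
  obtain \<beta> q where zz: "z = (\<beta>,q)" by (cases z)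
  obtain \<beta>' q' where ww: "w = (\<beta>',q')" by (cases w)
  have e': "val6 T \<beta> q = val6 T \<beta>' q'" using e zz ww by simp
  show "z = w" using z w e' unfolding zz ww Jset_def Iset_def val6_def
    by (cases \<beta>; cases \<beta>'; auto simp: vi6_AA vi6_AB vi6_AX vi6_AI vi6_BA vi6_BB vi6_BX vi6_BI vi6_XA vi6_XB vi6_XX vi6_XI vi6_IA vi6_IB vi6_IX vi6_II)
qed

lemma val6_bd: "(\<beta>,q) \<in> Jset T \<Longrightarrow> val6 T \<beta> q \<noteq> 0 \<and> 2 * \<bar>val6 T \<beta> q\<bar> < 14 * int T + 13"
  unfolding Jset_def Iset_def val6_def using vb6_A vb6_B vb6_X vb6_I by auto


definition valA5 :: "nat \<Rightarrow> nat \<Rightarrow> int list" where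
  "valA5 T k = [(-2 * int k + 2 * int T + 5), (int k + 2 * int T + 4), (-int k - 2 * int T - 4), (int k + 3 * int T + 4), (-int k - 3 * int T - 4), (int k + 4 * int T + 4), (int k + 6 * int T + 4)]"

definition valB5 :: "nat \<Rightarrow> nat \<Rightarrow> int list" where
  "valB5 T k = [(-2 * int k - 3), (2 * int k + 4), (2 * int k - 2 * int T - 6), (-int k - 4 * int T - 4), (int k + 5 * int T + 4), (-int k - 5 * int T - 4), (-int k - 6 * int T - 4)]"

lemma vi5_AA: "Suc 0 \<le> k \<Longrightarrow> k \<le> T \<Longrightarrow> Suc 0 \<le> k' \<Longrightarrow> k' \<le> T \<Longrightarrow> q < 7 \<Longrightarrow> q' < 7 \<Longrightarrow> (valA5 T k ! q = valA5 T k' ! q') = (k = k' \<and> q = q')"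
  unfolding less7 less5 valA5_def valB5_def valX_def valI_def
  apply (elim disjE)
  apply (simp_all)
  apply (presburger+)?
  done

lemma vi5_AB: "Suc 0 \<le> k \<Longrightarrow> k \<le> T \<Longrightarrow> Suc 0 \<le> k' \<Longrightarrow> k' \<le> T \<Longrightarrow> q < 7 \<Longrightarrow> q' < 7 \<Longrightarrow> valA5 T k ! q \<noteq> valB5 T k' ! q'"
  unfolding less7 less5 valA5_def valB5_def valX_def valI_def
  apply (elim disjE)
  apply (simp_all)
  apply (presburger+)?
  done

lemma vi5_AX: "Suc 0 \<le> k \<Longrightarrow> k \<le> T \<Longrightarrow> q < 7 \<Longrightarrow> q' < 7 \<Longrightarrow> valA5 T k ! q \<noteq> valX ! q'"
  unfolding less7 less5 valA5_def valB5_def valX_def valI_def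
  apply (elim disjE)
  apply (simp_all)
  apply (presburger+)?
  done

lemma vi5_AI: "Suc 0 \<le> k \<Longrightarrow> k \<le> T \<Longrightarrow> q < 7 \<Longrightarrow> q' < 5 \<Longrightarrow> valA5 T k ! q \<noteq> valI T ! q'"
  unfolding less7 less5 valA5_def valB5_def valX_def valI_def
  apply (elim disjE)
  apply (simp_all)
  apply (presburger+)?
  done

lemma vi5_BA: "Suc 0 \<le> k \<Longrightarrow> k \<le> T \<Longrightarrow> Suc 0 \<le> k' \<Longrightarrow> k' \<le> T \<Longrightarrow> q < 7 \<Longrightarrow> q' < 7 \<Longrightarrow> valB5 T k ! q \<noteq> valA5 T k' ! q'"
  unfolding less7 less5 valA5_def valB5_def valX_def valI_def
  apply (elim disjE)
  apply (simp_all)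
  apply (presburger+)?
  done

lemma vi5_BB: "Suc 0 \<le> k \<Longrightarrow> k \<le> T \<Longrightarrow> Suc 0 \<le> k' \<Longrightarrow> k' \<le> T \<Longrightarrow> q < 7 \<Longrightarrow> q' < 7 \<Longrightarrow> (valB5 T k ! q = valB5 T k' ! q') = (k = k' \<and> q = q')"
  unfolding less7 less5 valA5_def valB5_def valX_def valI_def
  apply (elim disjE)
  apply (simp_all)
  apply (presburger+)?
  done

lemma vi5_BX: "Suc 0 \<le> k \<Longrightarrow> k \<le> T \<Longrightarrow> q < 7 \<Longrightarrow> q' < 7 \<Longrightarrow> valB5 T k ! q \<noteq> valX ! q'"
  unfolding less7 less5 valA5_def valB5_def valX_def valI_def
  apply (elim disjE)
  apply (simp_all)
  apply (presburger+)?
  done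

lemma vi5_BI: "Suc 0 \<le> k \<Longrightarrow> k \<le> T \<Longrightarrow> q < 7 \<Longrightarrow> q' < 5 \<Longrightarrow> valB5 T k ! q \<noteq> valI T ! q'"
  unfolding less7 less5 valA5_def valB5_def valX_def valI_def
  apply (elim disjE)
  apply (simp_all)
  apply (presburger+)?
  done

lemma vi5_XA: "Suc 0 \<le> k' \<Longrightarrow> k' \<le> T \<Longrightarrow> q < 7 \<Longrightarrow> q' < 7 \<Longrightarrow> valX ! q \<noteq> valA5 T k' ! q'"
  unfolding less7 less5 valA5_def valB5_def valX_def valI_def
  apply (elim disjE)
  apply (simp_all)
  apply (presburger+)?
  done

lemma vi5_XB: "Suc 0 \<le> k' \<Longrightarrow> k' \<le> T \<Longrightarrow> q < 7 \<Longrightarrow> q' < 7 \<Longrightarrow> valX ! q \<noteq> valB5 T k' ! q'"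
  unfolding less7 less5 valA5_def valB5_def valX_def valI_def
  apply (elim disjE)
  apply (simp_all)
  apply (presburger+)?
  done

lemma vi5_XX: "q < 7 \<Longrightarrow> q' < 7 \<Longrightarrow> (valX ! q = valX ! q') = (q = q')"
  unfolding less7 less5 valA5_def valB5_def valX_def valI_def
  apply (elim disjE)
  apply (simp_all)
  apply (presburger+)?
  done

lemma vi5_XI: "q < 7 \<Longrightarrow> q' < 5 \<Longrightarrow> valX ! q \<noteq> valI T ! q'"
  unfolding less7 less5 valA5_def valB5_def valX_def valI_def
  apply (elim disjE)
  apply (simp_all)
  apply (presburger+)?
  done

lemma vi5_IA: "Suc 0 \<le> k' \<Longrightarrow> k' \<le> T \<Longrightarrow> q < 5 \<Longrightarrow> q' < 7 \<Longrightarrow> valI T ! q \<noteq> valA5 T k' ! q'"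
  unfolding less7 less5 valA5_def valB5_def valX_def valI_def
  apply (elim disjE)
  apply (simp_all)
  apply (presburger+)?
  done

lemma vi5_IB: "Suc 0 \<le> k' \<Longrightarrow> k' \<le> T \<Longrightarrow> q < 5 \<Longrightarrow> q' < 7 \<Longrightarrow> valI T ! q \<noteq> valB5 T k' ! q'"
  unfolding less7 less5 valA5_def valB5_def valX_def valI_def
  apply (elim disjE)
  apply (simp_all)
  apply (presburger+)?
  done

lemma vi5_IX: "q < 5 \<Longrightarrow> q' < 7 \<Longrightarrow> valI T ! q \<noteq> valX ! q'"
  unfolding less7 less5 valA5_def valB5_def valX_def valI_def
  apply (elim disjE)
  apply (simp_all)
  apply (presburger+)?
  done

lemma vi5_II: "q < 5 \<Longrightarrow> q' < 5 \<Longrightarrow> (valI T ! q = valI T ! q') = (q = q')"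
  unfolding less7 less5 valA5_def valB5_def valX_def valI_def
  apply (elim disjE)
  apply (simp_all)
  apply (presburger+)?
  done

lemma vb5_A: "Suc 0 \<le> k \<Longrightarrow> k \<le> T \<Longrightarrow> q < 7 \<Longrightarrow> valA5 T k ! q \<noteq> 0 \<and> 2 * \<bar>valA5 T k ! q\<bar> < 14 * int T + 13"
  unfolding less7 less5 valA5_def valB5_def valX_def valI_def
  apply (elim disjE)
  apply (simp_all)
  apply (presburger+)?
  done

lemma vb5_B: "Suc 0 \<le> k \<Longrightarrow> k \<le> T \<Longrightarrow> q < 7 \<Longrightarrow> valB5 T k ! q \<noteq> 0 \<and> 2 * \<bar>valB5 T k ! q\<bar> < 14 * int T + 13"
  unfolding less7 less5 valA5_def valB5_def valX_def valI_def
  apply (elim disjE)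
  apply (simp_all)
  apply (presburger+)?
  done

lemma vb5_X: "q < 7 \<Longrightarrow> valX ! q \<noteq> 0 \<and> 2 * \<bar>valX ! q\<bar> < 14 * int T + 13"
  unfolding less7 less5 valA5_def valB5_def valX_def valI_def
  apply (elim disjE)
  apply (simp_all)
  apply (presburger+)?
  done

lemma vb5_I: "q < 5 \<Longrightarrow> valI T ! q \<noteq> 0 \<and> 2 * \<bar>valI T ! q\<bar> < 14 * int T + 13"
  unfolding less7 less5 valA5_def valB5_def valX_def valI_def
  apply (elim disjE)
  apply (simp_all)
  apply (presburger+)?
  done

definition val5 :: "nat \<Rightarrow> idx \<Rightarrow> nat \<Rightarrow> int" where "val5 T \<beta> q = (case \<beta> of IA k \<Rightarrow> valA5 T k ! q | IB k \<Rightarrow> valB5 T k ! q | IX \<Rightarrow> valX ! q | IInf \<Rightarrow> valI T ! q)"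

lemma val5_inj: "inj_on (\<lambda>(\<beta>,q). val5 T \<beta> q) (Jset T)"
proof (rule inj_onI)
  fix z w assume z: "z \<in> Jset T" and w: "w \<in> Jset T" and e: "(\<lambda>(\<beta>,q). val5 T \<beta> q) z = (\<lambda>(\<beta>,q). val5 T \<beta> q) w"
  obtain \<beta> q where zz: "z = (\<beta>,q)" by (cases z)
  obtain \<beta>' q' where ww: "w = (\<beta>',q')" by (cases w)
  have e': "val5 T \<beta> q = val5 T \<beta>' q'" using e zz ww by simp
  show "z = w" using z w e' unfolding zz ww Jset_def Iset_def val5_def
    by (cases \<beta>; cases \<beta>'; auto simp: vi5_AA vi5_AB vi5_AX vi5_AI vi5_BA vi5_BB vi5_BX vi5_BI vi5_XA vi5_XB vi5_XX vi5_XI vi5_IA vi5_IB vi5_IX vi5_II)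
qed

lemma val5_bd: "(\<beta>,q) \<in> Jset T \<Longrightarrow> val5 T \<beta> q \<noteq> 0 \<and> 2 * \<bar>val5 T \<beta> q\<bar> < 14 * int T + 13"
  unfolding Jset_def Iset_def val5_def using vb5_A vb5_B vb5_X vb5_I by auto


definition valA4 :: "nat \<Rightarrow> nat \<Rightarrow> int list" where
  "valA4 T k = [(-2 * int k + 2 * int T + 5), (int k + 2 * int T + 4), (-int k - 2 * int T - 4), (int k + 3 * int T + 4), (-int k - 3 * int T - 4), (int k + 4 * int T + 4), (-int k - 6 * int T - 4)]"

definition valB4 :: "nat \<Rightarrow> nat \<Rightarrow> int list" where
  "valB4 T k = [(-2 * int k - 3), (2 * int k + 4), (2 * int k - 2 * int T - 6), (-int k - 4 * int T - 4), (int k + 5 * int T + 4), (-int k - 5 * int T - 4), (int k + 6 * int T + 4)]"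

lemma vi4_AA: "Suc 0 \<le> k \<Longrightarrow> k \<le> T \<Longrightarrow> Suc 0 \<le> k' \<Longrightarrow> k' \<le> T \<Longrightarrow> q < 7 \<Longrightarrow> q' < 7 \<Longrightarrow> (valA4 T k ! q = valA4 T k' ! q') = (k = k' \<and> q = q')"
  unfolding less7 less5 valA4_def valB4_def valX_def valI_def
  apply (elim disjE)
  apply (simp_all)
  apply (presburger+)?
  done

lemma vi4_AB: "Suc 0 \<le> k \<Longrightarrow> k \<le> T \<Longrightarrow> Suc 0 \<le> k' \<Longrightarrow> k' \<le> T \<Longrightarrow> q < 7 \<Longrightarrow> q' < 7 \<Longrightarrow> valA4 T k ! q \<noteq> valB4 T k' ! q'"
  unfolding less7 less5 valA4_def valB4_def valX_def valI_def
  apply (elim disjE)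
  apply (simp_all)
  apply (presburger+)?
  done

lemma vi4_AX: "Suc 0 \<le> k \<Longrightarrow> k \<le> T \<Longrightarrow> q < 7 \<Longrightarrow> q' < 7 \<Longrightarrow> valA4 T k ! q \<noteq> valX ! q'"
  unfolding less7 less5 valA4_def valB4_def valX_def valI_def
  apply (elim disjE)
  apply (simp_all)
  apply (presburger+)?
  done

lemma vi4_AI: "Suc 0 \<le> k \<Longrightarrow> k \<le> T \<Longrightarrow> q < 7 \<Longrightarrow> q' < 5 \<Longrightarrow> valA4 T k ! q \<noteq> valI T ! q'"
  unfolding less7 less5 valA4_def valB4_def valX_def valI_def
  apply (elim disjE)
  apply (simp_all)
  apply (presburger+)?
  done

lemma vi4_BA: "Suc 0 \<le> k \<Longrightarrow> k \<le> T \<Longrightarrow> Suc 0 \<le> k' \<Longrightarrow> k' \<le> T \<Longrightarrow> q < 7 \<Longrightarrow> q' < 7 \<Longrightarrow> valB4 T k ! q \<noteq> valA4 T k' ! q'"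
  unfolding less7 less5 valA4_def valB4_def valX_def valI_def
  apply (elim disjE)
  apply (simp_all)
  apply (presburger+)?
  done

lemma vi4_BB: "Suc 0 \<le> k \<Longrightarrow> k \<le> T \<Longrightarrow> Suc 0 \<le> k' \<Longrightarrow> k' \<le> T \<Longrightarrow> q < 7 \<Longrightarrow> q' < 7 \<Longrightarrow> (valB4 T k ! q = valB4 T k' ! q') = (k = k' \<and> q = q')"
  unfolding less7 less5 valA4_def valB4_def valX_def valI_def
  apply (elim disjE)
  apply (simp_all)
  apply (presburger+)?
  done

lemma vi4_BX: "Suc 0 \<le> k \<Longrightarrow> k \<le> T \<Longrightarrow> q < 7 \<Longrightarrow> q' < 7 \<Longrightarrow> valB4 T k ! q \<noteq> valX ! q'"
  unfolding less7 less5 valA4_def valB4_def valX_def valI_def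
  apply (elim disjE)
  apply (simp_all)
  apply (presburger+)?
  done

lemma vi4_BI: "Suc 0 \<le> k \<Longrightarrow> k \<le> T \<Longrightarrow> q < 7 \<Longrightarrow> q' < 5 \<Longrightarrow> valB4 T k ! q \<noteq> valI T ! q'"
  unfolding less7 less5 valA4_def valB4_def valX_def valI_def
  apply (elim disjE)
  apply (simp_all)
  apply (presburger+)?
  done

lemma vi4_XA: "Suc 0 \<le> k' \<Longrightarrow> k' \<le> T \<Longrightarrow> q < 7 \<Longrightarrow> q' < 7 \<Longrightarrow> valX ! q \<noteq> valA4 T k' ! q'"
  unfolding less7 less5 valA4_def valB4_def valX_def valI_def
  apply (elim disjE)
  apply (simp_all)
  apply (presburger+)?
  done

lemma vi4_XB: "Suc 0 \<le> k' \<Longrightarrow> k' \<le> T \<Longrightarrow> q < 7 \<Longrightarrow> q' < 7 \<Longrightarrow> valX ! q \<noteq> valB4 T k' ! q'"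
  unfolding less7 less5 valA4_def valB4_def valX_def valI_def
  apply (elim disjE)
  apply (simp_all)
  apply (presburger+)?
  done

lemma vi4_XX: "q < 7 \<Longrightarrow> q' < 7 \<Longrightarrow> (valX ! q = valX ! q') = (q = q')"
  unfolding less7 less5 valA4_def valB4_def valX_def valI_def
  apply (elim disjE)
  apply (simp_all)
  apply (presburger+)?
  done

lemma vi4_XI: "q < 7 \<Longrightarrow> q' < 5 \<Longrightarrow> valX ! q \<noteq> valI T ! q'"
  unfolding less7 less5 valA4_def valB4_def valX_def valI_def
  apply (elim disjE)
  apply (simp_all)
  apply (presburger+)?
  done

lemma vi4_IA: "Suc 0 \<le> k' \<Longrightarrow> k' \<le> T \<Longrightarrow> q < 5 \<Longrightarrow> q' < 7 \<Longrightarrow> valI T ! q \<noteq> valA4 T k' ! q'"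
  unfolding less7 less5 valA4_def valB4_def valX_def valI_def
  apply (elim disjE)
  apply (simp_all)
  apply (presburger+)?
  done

lemma vi4_IB: "Suc 0 \<le> k' \<Longrightarrow> k' \<le> T \<Longrightarrow> q < 5 \<Longrightarrow> q' < 7 \<Longrightarrow> valI T ! q \<noteq> valB4 T k' ! q'"
  unfolding less7 less5 valA4_def valB4_def valX_def valI_def
  apply (elim disjE)
  apply (simp_all)
  apply (presburger+)?
  done

lemma vi4_IX: "q < 5 \<Longrightarrow> q' < 7 \<Longrightarrow> valI T ! q \<noteq> valX ! q'"
  unfolding less7 less5 valA4_def valB4_def valX_def valI_def
  apply (elim disjE)
  apply (simp_all)
  apply (presburger+)?
  done

lemma vi4_II: "q < 5 \<Longrightarrow> q' < 5 \<Longrightarrow> (valI T ! q = valI T ! q') = (q = q')"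
  unfolding less7 less5 valA4_def valB4_def valX_def valI_def
  apply (elim disjE)
  apply (simp_all)
  apply (presburger+)?
  done

lemma vb4_A: "Suc 0 \<le> k \<Longrightarrow> k \<le> T \<Longrightarrow> q < 7 \<Longrightarrow> valA4 T k ! q \<noteq> 0 \<and> 2 * \<bar>valA4 T k ! q\<bar> < 14 * int T + 13"
  unfolding less7 less5 valA4_def valB4_def valX_def valI_def
  apply (elim disjE)
  apply (simp_all)
  apply (presburger+)?
  done

lemma vb4_B: "Suc 0 \<le> k \<Longrightarrow> k \<le> T \<Longrightarrow> q < 7 \<Longrightarrow> valB4 T k ! q \<noteq> 0 \<and> 2 * \<bar>valB4 T k ! q\<bar> < 14 * int T + 13"
  unfolding less7 less5 valA4_def valB4_def valX_def valI_def
  apply (elim disjE)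
  apply (simp_all)
  apply (presburger+)?
  done

lemma vb4_X: "q < 7 \<Longrightarrow> valX ! q \<noteq> 0 \<and> 2 * \<bar>valX ! q\<bar> < 14 * int T + 13"
  unfolding less7 less5 valA4_def valB4_def valX_def valI_def
  apply (elim disjE)
  apply (simp_all)
  apply (presburger+)?
  done

lemma vb4_I: "q < 5 \<Longrightarrow> valI T ! q \<noteq> 0 \<and> 2 * \<bar>valI T ! q\<bar> < 14 * int T + 13"
  unfolding less7 less5 valA4_def valB4_def valX_def valI_def
  apply (elim disjE)
  apply (simp_all)
  apply (presburger+)?
  done

definition val4 :: "nat \<Rightarrow> idx \<Rightarrow> nat \<Rightarrow> int" where "val4 T \<beta> q = (case \<beta> of IA k \<Rightarrow> valA4 T k ! q | IB k \<Rightarrow> valB4 T k ! q | IX \<Rightarrow> valX ! q | IInf \<Rightarrow> valI T ! q)"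

lemma val4_inj: "inj_on (\<lambda>(\<beta>,q). val4 T \<beta> q) (Jset T)"
proof (rule inj_onI)
  fix z w assume z: "z \<in> Jset T" and w: "w \<in> Jset T" and e: "(\<lambda>(\<beta>,q). val4 T \<beta> q) z = (\<lambda>(\<beta>,q). val4 T \<beta> q) w"
  obtain \<beta> q where zz: "z = (\<beta>,q)" by (cases z)
  obtain \<beta>' q' where ww: "w = (\<beta>',q')" by (cases w)
  have e': "val4 T \<beta> q = val4 T \<beta>' q'" using e zz ww by simp
  show "z = w" using z w e' unfolding zz ww Jset_def Iset_def val4_def
    by (cases \<beta>; cases \<beta>'; auto simp: vi4_AA vi4_AB vi4_AX vi4_AI vi4_BA vi4_BB vi4_BX vi4_BI vi4_XA vi4_XB vi4_XX vi4_XI vi4_IA vi4_IB vi4_IX vi4_II)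
qed

lemma val4_bd: "(\<beta>,q) \<in> Jset T \<Longrightarrow> val4 T \<beta> q \<noteq> 0 \<and> 2 * \<bar>val4 T \<beta> q\<bar> < 14 * int T + 13"
  unfolding Jset_def Iset_def val4_def using vb4_A vb4_B vb4_X vb4_I by auto


definition edge :: "nat \<times> nat \<Rightarrow> nat" where
  "edge ab = (if (fst ab = 6 \<and> snd ab = 0) \<or> (fst ab = 0 \<and> snd ab = 6) then 6 else min (fst ab) (snd ab))"

lemma set07: "{0..6::nat} = {0,1,2,3,4,5,6}" by auto

lemma inj_mod_small:
  assumes "\<forall>j\<in>S. \<forall>j'\<in>S. j \<noteq> j' \<longrightarrow> p j \<noteq> p j' \<and> \<bar>p j - p j'\<bar> < N"
  shows "inj_on (\<lambda>j. (p j :: int) mod N) S"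
proof (rule inj_onI)
  fix x y assume x: "x \<in> S" and y: "y \<in> S" and e: "p x mod N = p y mod N"
  show "x = y"
  proof (rule ccontr)
    assume ne: "x \<noteq> y"
    have "N dvd p x - p y" using e by (simp add: mod_eq_dvd_iff)
    then obtain c where c: "p x - p y = N * c" by (auto simp: dvd_def)
    have d: "p x \<noteq> p y \<and> \<bar>p x - p y\<bar> < N" using assms x y ne by blast
    have lt: "\<bar>N * c\<bar> < N" "N * c \<noteq> 0" using d c by auto
    hence "N > 0" by linarith
    have "c \<noteq> 0" using lt by auto
    hence "\<bar>c\<bar> \<ge> 1" by linarith
    hence "N * \<bar>c\<bar> \<ge> N" using \<open>N > 0\<close> by (simp add: mult_le_cancel_left1)
    thus False using lt \<open>N > 0\<close> by (simp add: abs_mult)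
  qed
qed

lemma modeq_intro: "x = y \<or> x = y + N \<or> x = y - N \<Longrightarrow> (x::int) mod N = y mod N"
  by auto

lemma card_Iset_minus: "card (Iset T - {IInf}) = 2 * T + 1"
proof -
  have e: "Iset T - {IInf} = {IX} \<union> (IA ` {1..T} \<union> IB ` {1..T})" unfolding Iset_def by auto
  have "card (IA ` {1..T} \<union> IB ` {1..T}) = T + T"
    by (subst card_Un_disjoint) (auto simp: card_image inj_on_def)
  thus ?thesis unfolding e by (subst card_Un_disjoint) auto
qed

lemma finite_Iset: "finite (Iset T)" unfolding Iset_def by auto

lemma card_arcs:
  assumes "card S = 7" "card S' = 5" "finite S" "finite S'"
  shows "card ((Iset T - {IInf}) \<times> S \<union> {IInf} \<times> S') = 14 * T + 13 - 1"
proof -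
  have "card ((Iset T - {IInf}) \<times> S \<union> {IInf} \<times> S') = card ((Iset T - {IInf}) \<times> S) + card ({IInf} \<times> S')"
    by (rule card_Un_disjoint) (auto simp: assms finite_Iset)
  also have "\<dots> = (2*T+1) * 7 + 5" by (simp add: card_cartesian_product card_Iset_minus assms)
  finally show ?thesis by simp
qed

lemma inj_comp:
  assumes "inj_on (\<lambda>(\<beta>,q). val \<beta> q) J"
    and "\<And>\<beta> ab. (\<beta>,ab) \<in> A \<Longrightarrow> (\<beta>, g \<beta> ab) \<in> J"
    and "\<And>\<beta> ab ab'. (\<beta>,ab) \<in> A \<Longrightarrow> (\<beta>,ab') \<in> A \<Longrightarrow> g \<beta> ab = g \<beta> ab' \<Longrightarrow> ab = ab'"
  shows "inj_on (\<lambda>(\<beta>,ab). val \<beta> (g \<beta> ab)) A"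
proof (rule inj_onI)
  fix z w assume z: "z \<in> A" and w: "w \<in> A" and e: "(\<lambda>(\<beta>,ab). val \<beta> (g \<beta> ab)) z = (\<lambda>(\<beta>,ab). val \<beta> (g \<beta> ab)) w"
  obtain \<beta> ab where zz: "z = (\<beta>,ab)" by (cases z)
  obtain \<beta>' ab' where ww: "w = (\<beta>',ab')" by (cases w)
  have "(\<lambda>(\<beta>,q). val \<beta> q) (\<beta>, g \<beta> ab) = (\<lambda>(\<beta>,q). val \<beta> q) (\<beta>', g \<beta>' ab')" using e zz ww by simp
  hence "(\<beta>, g \<beta> ab) = (\<beta>', g \<beta>' ab')" using inj_onD[OF assms(1)] assms(2) z w zz ww by blast
  thus "z = w" using assms(3)[of \<beta> ab ab'] z w zz ww by auto
qed

lemma Dpat1[simp]: "D_pattern 1 = [(1,0), (1,2), (2,3), (3,4), (4,5), (5,6), (6,0)]"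
  by (simp add: eval_nat_numeral)

lemma Dpat2[simp]: "D_pattern 2 = [(1,0), (2,1), (2,3), (3,4), (4,5), (5,6), (6,0)]"
  by (simp add: eval_nat_numeral)

lemma Dpat3[simp]: "D_pattern 3 = [(1,0), (1,2), (3,2), (3,4), (4,5), (5,6), (6,0)]"
  by (simp add: eval_nat_numeral)

lemma Dpat4[simp]: "D_pattern 4 = [(1,0), (1,2), (2,3), (4,3), (4,5), (5,6), (6,0)]"
  by (simp add: eval_nat_numeral)

lemma Dpat5[simp]: "D_pattern 5 = [(1,0), (2,1), (3,2), (3,4), (4,5), (5,6), (6,0)]"
  by (simp add: eval_nat_numeral)

lemma Dpat6[simp]: "D_pattern 6 = [(1,0), (2,1), (2,3), (3,4), (5,4), (5,6), (6,0)]"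
  by (simp add: eval_nat_numeral)

lemma Dpat7[simp]: "D_pattern 7 = [(1,0), (1,2), (3,2), (3,4), (4,5), (6,5), (6,0)]"
  by (simp add: eval_nat_numeral)

lemma Dpat8[simp]: "D_pattern 8 = [(1,0), (2,1), (2,3), (4,3), (4,5), (5,6), (6,0)]"
  by (simp add: eval_nat_numeral)

definition posA1 :: "nat \<Rightarrow> nat \<Rightarrow> int list" where
  "posA1 T k = [(0), (-int k - 3 * int T - 4), (-3 * int k - int T + 1), (-2 * int k + 5 * int T + 5), (-3 * int k + 3 * int T + 1), (-2 * int k + 7 * int T + 5), (-int k + 9 * int T + 9)]"

definition posB1 :: "nat \<Rightarrow> nat \<Rightarrow> int list" where
  "posB1 T k = [(0), (int k + 3 * int T + 4), (-int k + 3 * int T + 1), (int k + 3 * int T + 5), (-2 * int T + 1), (2 * int k - 4 * int T - 5), (int k - 8 * int T - 9)]"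

definition posX1 :: "int list" where
  "posX1 = [(0), (1), (2), (5), (3), (7), (4)]"

definition posI1 :: "nat \<Rightarrow> int list" where
  "posI1 T = [(-7 * int T - 4), (-14 * int T - 10), (0), (0), (2), (-7 * int T - 3), (-14 * int T - 9)]"

definition plc1 :: "idx \<Rightarrow> nat list" where
  "plc1 \<beta> = (case \<beta> of IA k \<Rightarrow> [3, 0, 6, 2, 4, 1, 5] | IB k \<Rightarrow> [3, 0, 1, 5, 2, 4, 6] | IX \<Rightarrow> [1, 0, 3, 2, 5, 4, 6] | IInf \<Rightarrow> [3, 0, 0, 0, 2, 4, 1])"

definition pos1 :: "nat \<Rightarrow> idx \<Rightarrow> nat \<Rightarrow> int" where
  "pos1 T \<beta> j = (case \<beta> of IA k \<Rightarrow> posA1 T k ! j | IB k \<Rightarrow> posB1 T k ! j | IX \<Rightarrow> posX1 ! j | IInf \<Rightarrow> posI1 T ! j)"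

definition sv1 :: "nat \<Rightarrow> idx \<Rightarrow> nat \<times> nat \<Rightarrow> int" where
  "sv1 T \<beta> ab = val6 T \<beta> (plc1 \<beta> ! edge ab)"

definition Arcs1 :: "nat \<Rightarrow> (idx \<times> (nat \<times> nat)) set" where
  "Arcs1 T = (Iset T - {IInf}) \<times> set (D_pattern 1) \<union> {IInf} \<times> {(a,b). (a,b) \<in> set (D_pattern 1) \<and> a \<noteq> 2 \<and> b \<noteq> 2}"

lemma Sp1: "{(a,b). (a,b) \<in> set (D_pattern 1) \<and> a \<noteq> 2 \<and> b \<noteq> 2} = set [(1,0), (3,4), (4,5), (5,6), (6,0)]"
  by auto

lemma injA1: "Suc 0 \<le> k \<Longrightarrow> k \<le> T \<Longrightarrow> inj_on (\<lambda>j. posA1 T k ! j mod (14 * int T + 13)) {0..6}"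
  by (rule inj_mod_small) (simp add: set07 posA1_def abs_less_iff)

lemma injB1: "Suc 0 \<le> k \<Longrightarrow> k \<le> T \<Longrightarrow> inj_on (\<lambda>j. posB1 T k ! j mod (14 * int T + 13)) {0..6}"
  by (rule inj_mod_small) (simp add: set07 posB1_def abs_less_iff)

lemma injX1: "inj_on (\<lambda>j. posX1 ! j mod (14 * int T + 13)) {0..6}"
  by (rule inj_mod_small) (simp add: set07 posX1_def abs_less_iff)

lemma injI1: "inj_on (\<lambda>j. posI1 T ! j mod (14 * int T + 13)) ({0..6} - {2})"
proof -
  have e: "{0..6::nat} - {2} = {0,1,3,4,5,6}" by auto
  show ?thesis unfolding e by (rule inj_mod_small) (simp add: posI1_def abs_less_iff)
qed

lemma smA1: "(a,b) \<in> set (D_pattern 1) \<Longrightarrow> (posA1 T k ! b - posA1 T k ! a) mod (14 * int T + 13) = valA6 T k ! (plc1 (IA k) ! edge (a,b)) mod (14 * int T + 13)"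
  by (rule modeq_intro) (auto simp: posA1_def valA6_def plc1_def edge_def)

lemma smB1: "(a,b) \<in> set (D_pattern 1) \<Longrightarrow> (posB1 T k ! b - posB1 T k ! a) mod (14 * int T + 13) = valB6 T k ! (plc1 (IB k) ! edge (a,b)) mod (14 * int T + 13)"
  by (rule modeq_intro) (auto simp: posB1_def valB6_def plc1_def edge_def)

lemma smX1: "(a,b) \<in> set (D_pattern 1) \<Longrightarrow> (posX1 ! b - posX1 ! a) mod (14 * int T + 13) = valX ! (plc1 IX ! edge (a,b)) mod (14 * int T + 13)"
  by (rule modeq_intro) (auto simp: posX1_def valX_def plc1_def edge_def)

lemma smI1: "(a,b) \<in> set [(1,0), (3,4), (4,5), (5,6), (6,0)] \<Longrightarrow> (posI1 T ! b - posI1 T ! a) mod (14 * int T + 13) = valI T ! (plc1 IInf ! edge (a,b)) mod (14 * int T + 13)"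
  by (rule modeq_intro) (auto simp: posI1_def valI_def plc1_def edge_def)

lemma jmem1: "(\<beta>,ab) \<in> Arcs1 T \<Longrightarrow> (\<beta>, plc1 \<beta> ! edge ab) \<in> Jset T"
  unfolding Arcs1_def Sp1 by (auto simp: Jset_def Iset_def plc1_def edge_def)

lemma ginj1: "(\<beta>,ab) \<in> Arcs1 T \<Longrightarrow> (\<beta>,ab') \<in> Arcs1 T \<Longrightarrow> plc1 \<beta> ! edge ab = plc1 \<beta> ! edge ab' \<Longrightarrow> ab = ab'"
  unfolding Arcs1_def Sp1 by (auto simp: Iset_def plc1_def edge_def)

lemma frame1: "frame 1 (14 * T + 13) (Iset T) IInf 2 (pos1 T) (sv1 T) (Arcs1 T)"
  apply unfold_locales
  subgoal by simp
  subgoal by auto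
  subgoal by (simp add: Iset_def)
  subgoal by simp
  subgoal by auto
  subgoal by auto
  subgoal by (rule finite_Iset)
  subgoal for \<beta> by (auto simp: Iset_def pos1_def injA1 injB1 injX1)
  subgoal using injI1[of T] by (simp add: pos1_def)
  subgoal by (simp add: Arcs1_def)
  subgoal for \<beta> a b unfolding Arcs1_def Sp1 by (auto simp: Iset_def pos1_def sv1_def val6_def smA1 smB1 smX1 smI1)
  subgoal for \<beta> ab using jmem1[of \<beta> ab T] val6_bd[of \<beta> _ T] by (simp add: sv1_def)
  subgoal for \<beta> ab using jmem1[of \<beta> ab T] val6_bd[of \<beta> _ T] by (simp add: sv1_def)
  subgoal unfolding sv1_def apply (rule inj_comp[OF val6_inj]) apply (erule jmem1) using ginj1 by blast
  subgoal unfolding Arcs1_def Sp1 by (rule card_arcs) auto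
  done

definition posA2 :: "nat \<Rightarrow> nat \<Rightarrow> int list" where
  "posA2 T k = [(0), (-int k - 2 * int T - 4), (int T), (-2 * int k + 3 * int T + 5), (-int k + 6 * int T + 9), (-2 * int k + 4 * int T + 5), (-int k + 8 * int T + 9)]"

definition posB2 :: "nat \<Rightarrow> nat \<Rightarrow> int list" where
  "posB2 T k = [(0), (-int k - 5 * int T - 4), (-int T), (-2 * int k - int T - 3), (-3 * int k - 7 * int T - 7), (-int k - 7 * int T - 3), (-2 * int k - 12 * int T - 7)]"

definition posX2 :: "int list" where
  "posX2 = [(0), (-1), (1), (4), (8), (7), (3)]"

definition posI2 :: "nat \<Rightarrow> int list" where
  "posI2 T = [(2), (0), (0), (7 * int T + 5), (7 * int T + 7), (1), (-7 * int T - 4)]"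

definition plc2 :: "idx \<Rightarrow> nat list" where
  "plc2 \<beta> = (case \<beta> of IA k \<Rightarrow> [1, 4, 0, 3, 2, 5, 6] | IB k \<Rightarrow> [4, 3, 0, 6, 1, 5, 2] | IX \<Rightarrow> [0, 2, 3, 5, 1, 6, 4] | IInf \<Rightarrow> [0, 0, 1, 0, 4, 2, 3])"

definition pos2 :: "nat \<Rightarrow> idx \<Rightarrow> nat \<Rightarrow> int" where
  "pos2 T \<beta> j = (case \<beta> of IA k \<Rightarrow> posA2 T k ! j | IB k \<Rightarrow> posB2 T k ! j | IX \<Rightarrow> posX2 ! j | IInf \<Rightarrow> posI2 T ! j)"

definition sv2 :: "nat \<Rightarrow> idx \<Rightarrow> nat \<times> nat \<Rightarrow> int" where
  "sv2 T \<beta> ab = val5 T \<beta> (plc2 \<beta> ! edge ab)"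

definition Arcs2 :: "nat \<Rightarrow> (idx \<times> (nat \<times> nat)) set" where
  "Arcs2 T = (Iset T - {IInf}) \<times> set (D_pattern 2) \<union> {IInf} \<times> {(a,b). (a,b) \<in> set (D_pattern 2) \<and> a \<noteq> 1 \<and> b \<noteq> 1}"

lemma Sp2: "{(a,b). (a,b) \<in> set (D_pattern 2) \<and> a \<noteq> 1 \<and> b \<noteq> 1} = set [(2,3), (3,4), (4,5), (5,6), (6,0)]"
  by auto

lemma injA2: "Suc 0 \<le> k \<Longrightarrow> k \<le> T \<Longrightarrow> inj_on (\<lambda>j. posA2 T k ! j mod (14 * int T + 13)) {0..6}"
  by (rule inj_mod_small) (simp add: set07 posA2_def abs_less_iff)

lemma injB2: "Suc 0 \<le> k \<Longrightarrow> k \<le> T \<Longrightarrow> inj_on (\<lambda>j. posB2 T k ! j mod (14 * int T + 13)) {0..6}"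
  by (rule inj_mod_small) (simp add: set07 posB2_def abs_less_iff)

lemma injX2: "inj_on (\<lambda>j. posX2 ! j mod (14 * int T + 13)) {0..6}"
  by (rule inj_mod_small) (simp add: set07 posX2_def abs_less_iff)

lemma injI2: "inj_on (\<lambda>j. posI2 T ! j mod (14 * int T + 13)) ({0..6} - {1})"
proof -
  have e: "{0..6::nat} - {1} = {0,2,3,4,5,6}" by auto
  show ?thesis unfolding e by (rule inj_mod_small) (simp add: posI2_def abs_less_iff)
qed

lemma smA2: "(a,b) \<in> set (D_pattern 2) \<Longrightarrow> (posA2 T k ! b - posA2 T k ! a) mod (14 * int T + 13) = valA5 T k ! (plc2 (IA k) ! edge (a,b)) mod (14 * int T + 13)"
  by (rule modeq_intro) (auto simp: posA2_def valA5_def plc2_def edge_def)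

lemma smB2: "(a,b) \<in> set (D_pattern 2) \<Longrightarrow> (posB2 T k ! b - posB2 T k ! a) mod (14 * int T + 13) = valB5 T k ! (plc2 (IB k) ! edge (a,b)) mod (14 * int T + 13)"
  by (rule modeq_intro) (auto simp: posB2_def valB5_def plc2_def edge_def)

lemma smX2: "(a,b) \<in> set (D_pattern 2) \<Longrightarrow> (posX2 ! b - posX2 ! a) mod (14 * int T + 13) = valX ! (plc2 IX ! edge (a,b)) mod (14 * int T + 13)"
  by (rule modeq_intro) (auto simp: posX2_def valX_def plc2_def edge_def)

lemma smI2: "(a,b) \<in> set [(2,3), (3,4), (4,5), (5,6), (6,0)] \<Longrightarrow> (posI2 T ! b - posI2 T ! a) mod (14 * int T + 13) = valI T ! (plc2 IInf ! edge (a,b)) mod (14 * int T + 13)"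
  by (rule modeq_intro) (auto simp: posI2_def valI_def plc2_def edge_def)

lemma jmem2: "(\<beta>,ab) \<in> Arcs2 T \<Longrightarrow> (\<beta>, plc2 \<beta> ! edge ab) \<in> Jset T"
  unfolding Arcs2_def Sp2 by (auto simp: Jset_def Iset_def plc2_def edge_def)

lemma ginj2: "(\<beta>,ab) \<in> Arcs2 T \<Longrightarrow> (\<beta>,ab') \<in> Arcs2 T \<Longrightarrow> plc2 \<beta> ! edge ab = plc2 \<beta> ! edge ab' \<Longrightarrow> ab = ab'"
  unfolding Arcs2_def Sp2 by (auto simp: Iset_def plc2_def edge_def)

lemma frame2: "frame 2 (14 * T + 13) (Iset T) IInf 1 (pos2 T) (sv2 T) (Arcs2 T)"
  apply unfold_locales
  subgoal by simp
  subgoal by auto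
  subgoal by (simp add: Iset_def)
  subgoal by simp
  subgoal by auto
  subgoal by auto
  subgoal by (rule finite_Iset)
  subgoal for \<beta> by (auto simp: Iset_def pos2_def injA2 injB2 injX2)
  subgoal using injI2[of T] by (simp add: pos2_def)
  subgoal by (simp add: Arcs2_def)
  subgoal for \<beta> a b unfolding Arcs2_def Sp2 by (auto simp: Iset_def pos2_def sv2_def val5_def smA2 smB2 smX2 smI2)
  subgoal for \<beta> ab using jmem2[of \<beta> ab T] val5_bd[of \<beta> _ T] by (simp add: sv2_def)
  subgoal for \<beta> ab using jmem2[of \<beta> ab T] val5_bd[of \<beta> _ T] by (simp add: sv2_def)
  subgoal unfolding sv2_def apply (rule inj_comp[OF val5_inj]) apply (erule jmem2) using ginj2 by blast
  subgoal unfolding Arcs2_def Sp2 by (rule card_arcs) auto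
  done

definition posA3 :: "nat \<Rightarrow> nat \<Rightarrow> int list" where
  "posA3 T k = [(0), (-int k - 2 * int T - 4), (-3 * int k + 1), (-2 * int k + 3 * int T + 5), (-int k + 6 * int T + 9), (-2 * int k + 4 * int T + 5), (-int k + 8 * int T + 9)]"

definition posB3 :: "nat \<Rightarrow> nat \<Rightarrow> int list" where
  "posB3 T k = [(0), (int k + 4 * int T + 4), (3 * int k + 2 * int T - 2), (2 * int k - 3 * int T - 6), (-3 * int T - 9), (2 * int k - 3 * int T - 5), (int k - 8 * int T - 9)]"

definition posX3 :: "int list" where
  "posX3 = [(0), (-1), (2), (4), (1), (-3), (-4)]"

definition posI3 :: "nat \<Rightarrow> int list" where
  "posI3 T = [(-7 * int T - 3), (-14 * int T - 8), (-7 * int T - 2), (4), (0), (0), (2)]"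

definition plc3 :: "idx \<Rightarrow> nat list" where
  "plc3 \<beta> = (case \<beta> of IA k \<Rightarrow> [1, 0, 4, 3, 2, 5, 6] | IB k \<Rightarrow> [3, 2, 4, 0, 1, 5, 6] | IX \<Rightarrow> [0, 3, 2, 4, 6, 1, 5] | IInf \<Rightarrow> [1, 3, 4, 0, 0, 0, 2])"

definition pos3 :: "nat \<Rightarrow> idx \<Rightarrow> nat \<Rightarrow> int" where
  "pos3 T \<beta> j = (case \<beta> of IA k \<Rightarrow> posA3 T k ! j | IB k \<Rightarrow> posB3 T k ! j | IX \<Rightarrow> posX3 ! j | IInf \<Rightarrow> posI3 T ! j)"

definition sv3 :: "nat \<Rightarrow> idx \<Rightarrow> nat \<times> nat \<Rightarrow> int" where
  "sv3 T \<beta> ab = val5 T \<beta> (plc3 \<beta> ! edge ab)"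

definition Arcs3 :: "nat \<Rightarrow> (idx \<times> (nat \<times> nat)) set" where
  "Arcs3 T = (Iset T - {IInf}) \<times> set (D_pattern 3) \<union> {IInf} \<times> {(a,b). (a,b) \<in> set (D_pattern 3) \<and> a \<noteq> 4 \<and> b \<noteq> 4}"

lemma Sp3: "{(a,b). (a,b) \<in> set (D_pattern 3) \<and> a \<noteq> 4 \<and> b \<noteq> 4} = set [(1,0), (1,2), (3,2), (5,6), (6,0)]"
  by auto

lemma injA3: "Suc 0 \<le> k \<Longrightarrow> k \<le> T \<Longrightarrow> inj_on (\<lambda>j. posA3 T k ! j mod (14 * int T + 13)) {0..6}"
  by (rule inj_mod_small) (simp add: set07 posA3_def abs_less_iff)

lemma injB3: "Suc 0 \<le> k \<Longrightarrow> k \<le> T \<Longrightarrow> inj_on (\<lambda>j. posB3 T k ! j mod (14 * int T + 13)) {0..6}"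
  by (rule inj_mod_small) (simp add: set07 posB3_def abs_less_iff)

lemma injX3: "inj_on (\<lambda>j. posX3 ! j mod (14 * int T + 13)) {0..6}"
  by (rule inj_mod_small) (simp add: set07 posX3_def abs_less_iff)

lemma injI3: "inj_on (\<lambda>j. posI3 T ! j mod (14 * int T + 13)) ({0..6} - {4})"
proof -
  have e: "{0..6::nat} - {4} = {0,1,2,3,5,6}" by auto
  show ?thesis unfolding e by (rule inj_mod_small) (simp add: posI3_def abs_less_iff)
qed

lemma smA3: "(a,b) \<in> set (D_pattern 3) \<Longrightarrow> (posA3 T k ! b - posA3 T k ! a) mod (14 * int T + 13) = valA5 T k ! (plc3 (IA k) ! edge (a,b)) mod (14 * int T + 13)"
  by (rule modeq_intro) (auto simp: posA3_def valA5_def plc3_def edge_def)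

lemma smB3: "(a,b) \<in> set (D_pattern 3) \<Longrightarrow> (posB3 T k ! b - posB3 T k ! a) mod (14 * int T + 13) = valB5 T k ! (plc3 (IB k) ! edge (a,b)) mod (14 * int T + 13)"
  by (rule modeq_intro) (auto simp: posB3_def valB5_def plc3_def edge_def)

lemma smX3: "(a,b) \<in> set (D_pattern 3) \<Longrightarrow> (posX3 ! b - posX3 ! a) mod (14 * int T + 13) = valX ! (plc3 IX ! edge (a,b)) mod (14 * int T + 13)"
  by (rule modeq_intro) (auto simp: posX3_def valX_def plc3_def edge_def)

lemma smI3: "(a,b) \<in> set [(1,0), (1,2), (3,2), (5,6), (6,0)] \<Longrightarrow> (posI3 T ! b - posI3 T ! a) mod (14 * int T + 13) = valI T ! (plc3 IInf ! edge (a,b)) mod (14 * int T + 13)"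
  by (rule modeq_intro) (auto simp: posI3_def valI_def plc3_def edge_def)

lemma jmem3: "(\<beta>,ab) \<in> Arcs3 T \<Longrightarrow> (\<beta>, plc3 \<beta> ! edge ab) \<in> Jset T"
  unfolding Arcs3_def Sp3 by (auto simp: Jset_def Iset_def plc3_def edge_def)

lemma ginj3: "(\<beta>,ab) \<in> Arcs3 T \<Longrightarrow> (\<beta>,ab') \<in> Arcs3 T \<Longrightarrow> plc3 \<beta> ! edge ab = plc3 \<beta> ! edge ab' \<Longrightarrow> ab = ab'"
  unfolding Arcs3_def Sp3 by (auto simp: Iset_def plc3_def edge_def)

lemma frame3: "frame 3 (14 * T + 13) (Iset T) IInf 4 (pos3 T) (sv3 T) (Arcs3 T)"
  apply unfold_locales
  subgoal by simp
  subgoal by auto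
  subgoal by (simp add: Iset_def)
  subgoal by simp
  subgoal by auto
  subgoal by auto
  subgoal by (rule finite_Iset)
  subgoal for \<beta> by (auto simp: Iset_def pos3_def injA3 injB3 injX3)
  subgoal using injI3[of T] by (simp add: pos3_def)
  subgoal by (simp add: Arcs3_def)
  subgoal for \<beta> a b unfolding Arcs3_def Sp3 by (auto simp: Iset_def pos3_def sv3_def val5_def smA3 smB3 smX3 smI3)
  subgoal for \<beta> ab using jmem3[of \<beta> ab T] val5_bd[of \<beta> _ T] by (simp add: sv3_def)
  subgoal for \<beta> ab using jmem3[of \<beta> ab T] val5_bd[of \<beta> _ T] by (simp add: sv3_def)
  subgoal unfolding sv3_def apply (rule inj_comp[OF val5_inj]) apply (erule jmem3) using ginj3 by blast
  subgoal unfolding Arcs3_def Sp3 by (rule card_arcs) auto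
  done

definition posA4 :: "nat \<Rightarrow> nat \<Rightarrow> int list" where
  "posA4 T k = [(0), (-int k - 2 * int T - 4), (-3 * int k + 1), (-2 * int k + 3 * int T + 5), (-int k + 6 * int T + 9), (-2 * int k + 4 * int T + 5), (-int k + 8 * int T + 9)]"

definition posB4 :: "nat \<Rightarrow> nat \<Rightarrow> int list" where
  "posB4 T k = [(0), (int k + 4 * int T + 4), (3 * int k + 2 * int T - 2), (2 * int k - 3 * int T - 6), (int k - 8 * int T - 10), (3 * int k - 8 * int T - 6), (int k - 8 * int T - 9)]"

definition posX4 :: "int list" where
  "posX4 = [(0), (-1), (-2), (1), (3), (7), (4)]"

definition posI4 :: "nat \<Rightarrow> int list" where
  "posI4 T = [(7 * int T + 4), (14 * int T + 10), (0), (0), (-2), (7 * int T + 3), (14 * int T + 9)]"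

definition plc4 :: "idx \<Rightarrow> nat list" where
  "plc4 \<beta> = (case \<beta> of IA k \<Rightarrow> [1, 0, 3, 4, 2, 5, 6] | IB k \<Rightarrow> [3, 2, 5, 4, 1, 0, 6] | IX \<Rightarrow> [0, 1, 3, 2, 5, 4, 6] | IInf \<Rightarrow> [4, 0, 0, 0, 1, 3, 2])"

definition pos4 :: "nat \<Rightarrow> idx \<Rightarrow> nat \<Rightarrow> int" where
  "pos4 T \<beta> j = (case \<beta> of IA k \<Rightarrow> posA4 T k ! j | IB k \<Rightarrow> posB4 T k ! j | IX \<Rightarrow> posX4 ! j | IInf \<Rightarrow> posI4 T ! j)"

definition sv4 :: "nat \<Rightarrow> idx \<Rightarrow> nat \<times> nat \<Rightarrow> int" where
  "sv4 T \<beta> ab = val5 T \<beta> (plc4 \<beta> ! edge ab)"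

definition Arcs4 :: "nat \<Rightarrow> (idx \<times> (nat \<times> nat)) set" where
  "Arcs4 T = (Iset T - {IInf}) \<times> set (D_pattern 4) \<union> {IInf} \<times> {(a,b). (a,b) \<in> set (D_pattern 4) \<and> a \<noteq> 2 \<and> b \<noteq> 2}"

lemma Sp4: "{(a,b). (a,b) \<in> set (D_pattern 4) \<and> a \<noteq> 2 \<and> b \<noteq> 2} = set [(1,0), (4,3), (4,5), (5,6), (6,0)]"
  by auto

lemma injA4: "Suc 0 \<le> k \<Longrightarrow> k \<le> T \<Longrightarrow> inj_on (\<lambda>j. posA4 T k ! j mod (14 * int T + 13)) {0..6}"
  by (rule inj_mod_small) (simp add: set07 posA4_def abs_less_iff)

lemma injB4: "Suc 0 \<le> k \<Longrightarrow> k \<le> T \<Longrightarrow> inj_on (\<lambda>j. posB4 T k ! j mod (14 * int T + 13)) {0..6}"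
  by (rule inj_mod_small) (simp add: set07 posB4_def abs_less_iff)

lemma injX4: "inj_on (\<lambda>j. posX4 ! j mod (14 * int T + 13)) {0..6}"
  by (rule inj_mod_small) (simp add: set07 posX4_def abs_less_iff)

lemma injI4: "inj_on (\<lambda>j. posI4 T ! j mod (14 * int T + 13)) ({0..6} - {2})"
proof -
  have e: "{0..6::nat} - {2} = {0,1,3,4,5,6}" by auto
  show ?thesis unfolding e by (rule inj_mod_small) (simp add: posI4_def abs_less_iff)
qed

lemma smA4: "(a,b) \<in> set (D_pattern 4) \<Longrightarrow> (posA4 T k ! b - posA4 T k ! a) mod (14 * int T + 13) = valA5 T k ! (plc4 (IA k) ! edge (a,b)) mod (14 * int T + 13)"
  by (rule modeq_intro) (auto simp: posA4_def valA5_def plc4_def edge_def)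

lemma smB4: "(a,b) \<in> set (D_pattern 4) \<Longrightarrow> (posB4 T k ! b - posB4 T k ! a) mod (14 * int T + 13) = valB5 T k ! (plc4 (IB k) ! edge (a,b)) mod (14 * int T + 13)"
  by (rule modeq_intro) (auto simp: posB4_def valB5_def plc4_def edge_def)

lemma smX4: "(a,b) \<in> set (D_pattern 4) \<Longrightarrow> (posX4 ! b - posX4 ! a) mod (14 * int T + 13) = valX ! (plc4 IX ! edge (a,b)) mod (14 * int T + 13)"
  by (rule modeq_intro) (auto simp: posX4_def valX_def plc4_def edge_def)

lemma smI4: "(a,b) \<in> set [(1,0), (4,3), (4,5), (5,6), (6,0)] \<Longrightarrow> (posI4 T ! b - posI4 T ! a) mod (14 * int T + 13) = valI T ! (plc4 IInf ! edge (a,b)) mod (14 * int T + 13)"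
  by (rule modeq_intro) (auto simp: posI4_def valI_def plc4_def edge_def)

lemma jmem4: "(\<beta>,ab) \<in> Arcs4 T \<Longrightarrow> (\<beta>, plc4 \<beta> ! edge ab) \<in> Jset T"
  unfolding Arcs4_def Sp4 by (auto simp: Jset_def Iset_def plc4_def edge_def)

lemma ginj4: "(\<beta>,ab) \<in> Arcs4 T \<Longrightarrow> (\<beta>,ab') \<in> Arcs4 T \<Longrightarrow> plc4 \<beta> ! edge ab = plc4 \<beta> ! edge ab' \<Longrightarrow> ab = ab'"
  unfolding Arcs4_def Sp4 by (auto simp: Iset_def plc4_def edge_def)

lemma frame4: "frame 4 (14 * T + 13) (Iset T) IInf 2 (pos4 T) (sv4 T) (Arcs4 T)"
  apply unfold_locales
  subgoal by simp
  subgoal by auto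
  subgoal by (simp add: Iset_def)
  subgoal by simp
  subgoal by auto
  subgoal by auto
  subgoal by (rule finite_Iset)
  subgoal for \<beta> by (auto simp: Iset_def pos4_def injA4 injB4 injX4)
  subgoal using injI4[of T] by (simp add: pos4_def)
  subgoal by (simp add: Arcs4_def)
  subgoal for \<beta> a b unfolding Arcs4_def Sp4 by (auto simp: Iset_def pos4_def sv4_def val5_def smA4 smB4 smX4 smI4)
  subgoal for \<beta> ab using jmem4[of \<beta> ab T] val5_bd[of \<beta> _ T] by (simp add: sv4_def)
  subgoal for \<beta> ab using jmem4[of \<beta> ab T] val5_bd[of \<beta> _ T] by (simp add: sv4_def)
  subgoal unfolding sv4_def apply (rule inj_comp[OF val5_inj]) apply (erule jmem4) using ginj4 by blast
  subgoal unfolding Arcs4_def Sp4 by (rule card_arcs) auto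
  done

definition posA5 :: "nat \<Rightarrow> nat \<Rightarrow> int list" where
  "posA5 T k = [(0), (-int k - 2 * int T - 4), (int T), (int k + 7 * int T + 4), (-int k + 9 * int T + 9), (-2 * int k + 7 * int T + 5), (-int k + 10 * int T + 9)]"

definition posB5 :: "nat \<Rightarrow> nat \<Rightarrow> int list" where
  "posB5 T k = [(0), (-int k - 5 * int T - 4), (-int T), (-int k - 7 * int T - 4), (-3 * int k - 7 * int T - 7), (-int k - 7 * int T - 3), (-2 * int k - 12 * int T - 7)]"

definition posX5 :: "int list" where
  "posX5 = [(0), (2), (5), (1), (4), (3), (-1)]"

definition posI5 :: "nat \<Rightarrow> int list" where
  "posI5 T = [(-14 * int T - 8), (0), (0), (-7 * int T - 5), (-7 * int T - 3), (3), (-7 * int T - 2)]"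

definition plc5 :: "idx \<Rightarrow> nat list" where
  "plc5 \<beta> = (case \<beta> of IA k \<Rightarrow> [1, 4, 6, 0, 2, 3, 5] | IB k \<Rightarrow> [4, 3, 6, 0, 1, 5, 2] | IX \<Rightarrow> [2, 4, 5, 3, 1, 6, 0] | IInf \<Rightarrow> [0, 0, 1, 0, 3, 2, 4])"

definition pos5 :: "nat \<Rightarrow> idx \<Rightarrow> nat \<Rightarrow> int" where
  "pos5 T \<beta> j = (case \<beta> of IA k \<Rightarrow> posA5 T k ! j | IB k \<Rightarrow> posB5 T k ! j | IX \<Rightarrow> posX5 ! j | IInf \<Rightarrow> posI5 T ! j)"

definition sv5 :: "nat \<Rightarrow> idx \<Rightarrow> nat \<times> nat \<Rightarrow> int" where
  "sv5 T \<beta> ab = val4 T \<beta> (plc5 \<beta> ! edge ab)"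

definition Arcs5 :: "nat \<Rightarrow> (idx \<times> (nat \<times> nat)) set" where
  "Arcs5 T = (Iset T - {IInf}) \<times> set (D_pattern 5) \<union> {IInf} \<times> {(a,b). (a,b) \<in> set (D_pattern 5) \<and> a \<noteq> 1 \<and> b \<noteq> 1}"

lemma Sp5: "{(a,b). (a,b) \<in> set (D_pattern 5) \<and> a \<noteq> 1 \<and> b \<noteq> 1} = set [(3,2), (3,4), (4,5), (5,6), (6,0)]"
  by auto

lemma injA5: "Suc 0 \<le> k \<Longrightarrow> k \<le> T \<Longrightarrow> inj_on (\<lambda>j. posA5 T k ! j mod (14 * int T + 13)) {0..6}"
  by (rule inj_mod_small) (simp add: set07 posA5_def abs_less_iff)

lemma injB5: "Suc 0 \<le> k \<Longrightarrow> k \<le> T \<Longrightarrow> inj_on (\<lambda>j. posB5 T k ! j mod (14 * int T + 13)) {0..6}"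
  by (rule inj_mod_small) (simp add: set07 posB5_def abs_less_iff)

lemma injX5: "inj_on (\<lambda>j. posX5 ! j mod (14 * int T + 13)) {0..6}"
  by (rule inj_mod_small) (simp add: set07 posX5_def abs_less_iff)

lemma injI5: "inj_on (\<lambda>j. posI5 T ! j mod (14 * int T + 13)) ({0..6} - {1})"
proof -
  have e: "{0..6::nat} - {1} = {0,2,3,4,5,6}" by auto
  show ?thesis unfolding e by (rule inj_mod_small) (simp add: posI5_def abs_less_iff)
qed

lemma smA5: "(a,b) \<in> set (D_pattern 5) \<Longrightarrow> (posA5 T k ! b - posA5 T k ! a) mod (14 * int T + 13) = valA4 T k ! (plc5 (IA k) ! edge (a,b)) mod (14 * int T + 13)"
  by (rule modeq_intro) (auto simp: posA5_def valA4_def plc5_def edge_def)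

lemma smB5: "(a,b) \<in> set (D_pattern 5) \<Longrightarrow> (posB5 T k ! b - posB5 T k ! a) mod (14 * int T + 13) = valB4 T k ! (plc5 (IB k) ! edge (a,b)) mod (14 * int T + 13)"
  by (rule modeq_intro) (auto simp: posB5_def valB4_def plc5_def edge_def)

lemma smX5: "(a,b) \<in> set (D_pattern 5) \<Longrightarrow> (posX5 ! b - posX5 ! a) mod (14 * int T + 13) = valX ! (plc5 IX ! edge (a,b)) mod (14 * int T + 13)"
  by (rule modeq_intro) (auto simp: posX5_def valX_def plc5_def edge_def)

lemma smI5: "(a,b) \<in> set [(3,2), (3,4), (4,5), (5,6), (6,0)] \<Longrightarrow> (posI5 T ! b - posI5 T ! a) mod (14 * int T + 13) = valI T ! (plc5 IInf ! edge (a,b)) mod (14 * int T + 13)"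
  by (rule modeq_intro) (auto simp: posI5_def valI_def plc5_def edge_def)

lemma jmem5: "(\<beta>,ab) \<in> Arcs5 T \<Longrightarrow> (\<beta>, plc5 \<beta> ! edge ab) \<in> Jset T"
  unfolding Arcs5_def Sp5 by (auto simp: Jset_def Iset_def plc5_def edge_def)

lemma ginj5: "(\<beta>,ab) \<in> Arcs5 T \<Longrightarrow> (\<beta>,ab') \<in> Arcs5 T \<Longrightarrow> plc5 \<beta> ! edge ab = plc5 \<beta> ! edge ab' \<Longrightarrow> ab = ab'"
  unfolding Arcs5_def Sp5 by (auto simp: Iset_def plc5_def edge_def)

lemma frame5: "frame 5 (14 * T + 13) (Iset T) IInf 1 (pos5 T) (sv5 T) (Arcs5 T)"
  apply unfold_locales
  subgoal by simp
  subgoal by auto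
  subgoal by (simp add: Iset_def)
  subgoal by simp
  subgoal by auto
  subgoal by auto
  subgoal by (rule finite_Iset)
  subgoal for \<beta> by (auto simp: Iset_def pos5_def injA5 injB5 injX5)
  subgoal using injI5[of T] by (simp add: pos5_def)
  subgoal by (simp add: Arcs5_def)
  subgoal for \<beta> a b unfolding Arcs5_def Sp5 by (auto simp: Iset_def pos5_def sv5_def val4_def smA5 smB5 smX5 smI5)
  subgoal for \<beta> ab using jmem5[of \<beta> ab T] val4_bd[of \<beta> _ T] by (simp add: sv5_def)
  subgoal for \<beta> ab using jmem5[of \<beta> ab T] val4_bd[of \<beta> _ T] by (simp add: sv5_def)
  subgoal unfolding sv5_def apply (rule inj_comp[OF val4_inj]) apply (erule jmem5) using ginj5 by blast
  subgoal unfolding Arcs5_def Sp5 by (rule card_arcs) auto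
  done

definition posA6 :: "nat \<Rightarrow> nat \<Rightarrow> int list" where
  "posA6 T k = [(0), (-int k - 2 * int T - 4), (4 * int T), (-2 * int k + 6 * int T + 5), (-3 * int k + 4 * int T + 1), (-2 * int k + 7 * int T + 5), (-int k + 10 * int T + 9)]"

definition posB6 :: "nat \<Rightarrow> nat \<Rightarrow> int list" where
  "posB6 T k = [(0), (int k + 4 * int T + 4), (-2 * int T), (-2 * int k - 2 * int T - 3), (-2 * int T + 1), (-int k - 7 * int T - 3), (int k - 9 * int T - 9)]"

definition posX6 :: "int list" where
  "posX6 = [(0), (1), (-2), (-1), (3), (6), (4)]"

definition posI6 :: "nat \<Rightarrow> int list" where
  "posI6 T = [(-14 * int T - 10), (0), (0), (2), (-7 * int T - 3), (-14 * int T - 9), (-7 * int T - 4)]"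

definition plc6 :: "idx \<Rightarrow> nat list" where
  "plc6 \<beta> = (case \<beta> of IA k \<Rightarrow> [1, 6, 0, 2, 4, 3, 5] | IB k \<Rightarrow> [3, 6, 0, 1, 4, 2, 5] | IX \<Rightarrow> [1, 3, 0, 5, 4, 2, 6] | IInf \<Rightarrow> [0, 0, 0, 2, 3, 1, 4])"

definition pos6 :: "nat \<Rightarrow> idx \<Rightarrow> nat \<Rightarrow> int" where
  "pos6 T \<beta> j = (case \<beta> of IA k \<Rightarrow> posA6 T k ! j | IB k \<Rightarrow> posB6 T k ! j | IX \<Rightarrow> posX6 ! j | IInf \<Rightarrow> posI6 T ! j)"

definition sv6 :: "nat \<Rightarrow> idx \<Rightarrow> nat \<times> nat \<Rightarrow> int" where
  "sv6 T \<beta> ab = val4 T \<beta> (plc6 \<beta> ! edge ab)"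

definition Arcs6 :: "nat \<Rightarrow> (idx \<times> (nat \<times> nat)) set" where
  "Arcs6 T = (Iset T - {IInf}) \<times> set (D_pattern 6) \<union> {IInf} \<times> {(a,b). (a,b) \<in> set (D_pattern 6) \<and> a \<noteq> 1 \<and> b \<noteq> 1}"

lemma Sp6: "{(a,b). (a,b) \<in> set (D_pattern 6) \<and> a \<noteq> 1 \<and> b \<noteq> 1} = set [(2,3), (3,4), (5,4), (5,6), (6,0)]"
  by auto

lemma injA6: "Suc 0 \<le> k \<Longrightarrow> k \<le> T \<Longrightarrow> inj_on (\<lambda>j. posA6 T k ! j mod (14 * int T + 13)) {0..6}"
  by (rule inj_mod_small) (simp add: set07 posA6_def abs_less_iff)

lemma injB6: "Suc 0 \<le> k \<Longrightarrow> k \<le> T \<Longrightarrow> inj_on (\<lambda>j. posB6 T k ! j mod (14 * int T + 13)) {0..6}"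
  by (rule inj_mod_small) (simp add: set07 posB6_def abs_less_iff)

lemma injX6: "inj_on (\<lambda>j. posX6 ! j mod (14 * int T + 13)) {0..6}"
  by (rule inj_mod_small) (simp add: set07 posX6_def abs_less_iff)

lemma injI6: "inj_on (\<lambda>j. posI6 T ! j mod (14 * int T + 13)) ({0..6} - {1})"
proof -
  have e: "{0..6::nat} - {1} = {0,2,3,4,5,6}" by auto
  show ?thesis unfolding e by (rule inj_mod_small) (simp add: posI6_def abs_less_iff)
qed

lemma smA6: "(a,b) \<in> set (D_pattern 6) \<Longrightarrow> (posA6 T k ! b - posA6 T k ! a) mod (14 * int T + 13) = valA4 T k ! (plc6 (IA k) ! edge (a,b)) mod (14 * int T + 13)"
  by (rule modeq_intro) (auto simp: posA6_def valA4_def plc6_def edge_def)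

lemma smB6: "(a,b) \<in> set (D_pattern 6) \<Longrightarrow> (posB6 T k ! b - posB6 T k ! a) mod (14 * int T + 13) = valB4 T k ! (plc6 (IB k) ! edge (a,b)) mod (14 * int T + 13)"
  by (rule modeq_intro) (auto simp: posB6_def valB4_def plc6_def edge_def)

lemma smX6: "(a,b) \<in> set (D_pattern 6) \<Longrightarrow> (posX6 ! b - posX6 ! a) mod (14 * int T + 13) = valX ! (plc6 IX ! edge (a,b)) mod (14 * int T + 13)"
  by (rule modeq_intro) (auto simp: posX6_def valX_def plc6_def edge_def)

lemma smI6: "(a,b) \<in> set [(2,3), (3,4), (5,4), (5,6), (6,0)] \<Longrightarrow> (posI6 T ! b - posI6 T ! a) mod (14 * int T + 13) = valI T ! (plc6 IInf ! edge (a,b)) mod (14 * int T + 13)"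
  by (rule modeq_intro) (auto simp: posI6_def valI_def plc6_def edge_def)

lemma jmem6: "(\<beta>,ab) \<in> Arcs6 T \<Longrightarrow> (\<beta>, plc6 \<beta> ! edge ab) \<in> Jset T"
  unfolding Arcs6_def Sp6 by (auto simp: Jset_def Iset_def plc6_def edge_def)

lemma ginj6: "(\<beta>,ab) \<in> Arcs6 T \<Longrightarrow> (\<beta>,ab') \<in> Arcs6 T \<Longrightarrow> plc6 \<beta> ! edge ab = plc6 \<beta> ! edge ab' \<Longrightarrow> ab = ab'"
  unfolding Arcs6_def Sp6 by (auto simp: Iset_def plc6_def edge_def)

lemma frame6: "frame 6 (14 * T + 13) (Iset T) IInf 1 (pos6 T) (sv6 T) (Arcs6 T)"
  apply unfold_locales
  subgoal by simp
  subgoal by auto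
  subgoal by (simp add: Iset_def)
  subgoal by simp
  subgoal by auto
  subgoal by auto
  subgoal by (rule finite_Iset)
  subgoal for \<beta> by (auto simp: Iset_def pos6_def injA6 injB6 injX6)
  subgoal using injI6[of T] by (simp add: pos6_def)
  subgoal by (simp add: Arcs6_def)
  subgoal for \<beta> a b unfolding Arcs6_def Sp6 by (auto simp: Iset_def pos6_def sv6_def val4_def smA6 smB6 smX6 smI6)
  subgoal for \<beta> ab using jmem6[of \<beta> ab T] val4_bd[of \<beta> _ T] by (simp add: sv6_def)
  subgoal for \<beta> ab using jmem6[of \<beta> ab T] val4_bd[of \<beta> _ T] by (simp add: sv6_def)
  subgoal unfolding sv6_def apply (rule inj_comp[OF val4_inj]) apply (erule jmem6) using ginj6 by blast
  subgoal unfolding Arcs6_def Sp6 by (rule card_arcs) auto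
  done

definition posA7 :: "nat \<Rightarrow> nat \<Rightarrow> int list" where
  "posA7 T k = [(0), (-int k - 2 * int T - 4), (-3 * int k + 1), (-2 * int k + 6 * int T + 5), (-3 * int k + 4 * int T + 1), (-2 * int k + 7 * int T + 5), (-int k + 10 * int T + 9)]"

definition posB7 :: "nat \<Rightarrow> nat \<Rightarrow> int list" where
  "posB7 T k = [(0), (int k + 4 * int T + 4), (3 * int k + 2 * int T - 2), (2 * int k - 3 * int T - 6), (-3 * int T - 9), (2 * int k - 3 * int T - 5), (int k - 9 * int T - 9)]"

definition posX7 :: "int list" where
  "posX7 = [(0), (1), (2), (-1), (-3), (-7), (-4)]"

definition posI7 :: "nat \<Rightarrow> int list" where
  "posI7 T = [(7 * int T + 3), (14 * int T + 8), (7 * int T + 2), (-4), (0), (0), (-2)]"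

definition plc7 :: "idx \<Rightarrow> nat list" where
  "plc7 \<beta> = (case \<beta> of IA k \<Rightarrow> [1, 0, 6, 2, 3, 4, 5] | IB k \<Rightarrow> [3, 2, 4, 0, 1, 6, 5] | IX \<Rightarrow> [1, 0, 3, 2, 6, 4, 5] | IInf \<Rightarrow> [2, 4, 3, 0, 0, 0, 1])"

definition pos7 :: "nat \<Rightarrow> idx \<Rightarrow> nat \<Rightarrow> int" where
  "pos7 T \<beta> j = (case \<beta> of IA k \<Rightarrow> posA7 T k ! j | IB k \<Rightarrow> posB7 T k ! j | IX \<Rightarrow> posX7 ! j | IInf \<Rightarrow> posI7 T ! j)"

definition sv7 :: "nat \<Rightarrow> idx \<Rightarrow> nat \<times> nat \<Rightarrow> int" where
  "sv7 T \<beta> ab = val4 T \<beta> (plc7 \<beta> ! edge ab)"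

definition Arcs7 :: "nat \<Rightarrow> (idx \<times> (nat \<times> nat)) set" where
  "Arcs7 T = (Iset T - {IInf}) \<times> set (D_pattern 7) \<union> {IInf} \<times> {(a,b). (a,b) \<in> set (D_pattern 7) \<and> a \<noteq> 4 \<and> b \<noteq> 4}"

lemma Sp7: "{(a,b). (a,b) \<in> set (D_pattern 7) \<and> a \<noteq> 4 \<and> b \<noteq> 4} = set [(1,0), (1,2), (3,2), (6,5), (6,0)]"
  by auto

lemma injA7: "Suc 0 \<le> k \<Longrightarrow> k \<le> T \<Longrightarrow> inj_on (\<lambda>j. posA7 T k ! j mod (14 * int T + 13)) {0..6}"
  by (rule inj_mod_small) (simp add: set07 posA7_def abs_less_iff)

lemma injB7: "Suc 0 \<le> k \<Longrightarrow> k \<le> T \<Longrightarrow> inj_on (\<lambda>j. posB7 T k ! j mod (14 * int T + 13)) {0..6}"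
  by (rule inj_mod_small) (simp add: set07 posB7_def abs_less_iff)

lemma injX7: "inj_on (\<lambda>j. posX7 ! j mod (14 * int T + 13)) {0..6}"
  by (rule inj_mod_small) (simp add: set07 posX7_def abs_less_iff)

lemma injI7: "inj_on (\<lambda>j. posI7 T ! j mod (14 * int T + 13)) ({0..6} - {4})"
proof -
  have e: "{0..6::nat} - {4} = {0,1,2,3,5,6}" by auto
  show ?thesis unfolding e by (rule inj_mod_small) (simp add: posI7_def abs_less_iff)
qed

lemma smA7: "(a,b) \<in> set (D_pattern 7) \<Longrightarrow> (posA7 T k ! b - posA7 T k ! a) mod (14 * int T + 13) = valA4 T k ! (plc7 (IA k) ! edge (a,b)) mod (14 * int T + 13)"
  by (rule modeq_intro) (auto simp: posA7_def valA4_def plc7_def edge_def)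

lemma smB7: "(a,b) \<in> set (D_pattern 7) \<Longrightarrow> (posB7 T k ! b - posB7 T k ! a) mod (14 * int T + 13) = valB4 T k ! (plc7 (IB k) ! edge (a,b)) mod (14 * int T + 13)"
  by (rule modeq_intro) (auto simp: posB7_def valB4_def plc7_def edge_def)

lemma smX7: "(a,b) \<in> set (D_pattern 7) \<Longrightarrow> (posX7 ! b - posX7 ! a) mod (14 * int T + 13) = valX ! (plc7 IX ! edge (a,b)) mod (14 * int T + 13)"
  by (rule modeq_intro) (auto simp: posX7_def valX_def plc7_def edge_def)

lemma smI7: "(a,b) \<in> set [(1,0), (1,2), (3,2), (6,5), (6,0)] \<Longrightarrow> (posI7 T ! b - posI7 T ! a) mod (14 * int T + 13) = valI T ! (plc7 IInf ! edge (a,b)) mod (14 * int T + 13)"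
  by (rule modeq_intro) (auto simp: posI7_def valI_def plc7_def edge_def)

lemma jmem7: "(\<beta>,ab) \<in> Arcs7 T \<Longrightarrow> (\<beta>, plc7 \<beta> ! edge ab) \<in> Jset T"
  unfolding Arcs7_def Sp7 by (auto simp: Jset_def Iset_def plc7_def edge_def)

lemma ginj7: "(\<beta>,ab) \<in> Arcs7 T \<Longrightarrow> (\<beta>,ab') \<in> Arcs7 T \<Longrightarrow> plc7 \<beta> ! edge ab = plc7 \<beta> ! edge ab' \<Longrightarrow> ab = ab'"
  unfolding Arcs7_def Sp7 by (auto simp: Iset_def plc7_def edge_def)

lemma frame7: "frame 7 (14 * T + 13) (Iset T) IInf 4 (pos7 T) (sv7 T) (Arcs7 T)"
  apply unfold_locales
  subgoal by simp
  subgoal by auto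
  subgoal by (simp add: Iset_def)
  subgoal by simp
  subgoal by auto
  subgoal by auto
  subgoal by (rule finite_Iset)
  subgoal for \<beta> by (auto simp: Iset_def pos7_def injA7 injB7 injX7)
  subgoal using injI7[of T] by (simp add: pos7_def)
  subgoal by (simp add: Arcs7_def)
  subgoal for \<beta> a b unfolding Arcs7_def Sp7 by (auto simp: Iset_def pos7_def sv7_def val4_def smA7 smB7 smX7 smI7)
  subgoal for \<beta> ab using jmem7[of \<beta> ab T] val4_bd[of \<beta> _ T] by (simp add: sv7_def)
  subgoal for \<beta> ab using jmem7[of \<beta> ab T] val4_bd[of \<beta> _ T] by (simp add: sv7_def)
  subgoal unfolding sv7_def apply (rule inj_comp[OF val4_inj]) apply (erule jmem7) using ginj7 by blast
  subgoal unfolding Arcs7_def Sp7 by (rule card_arcs) auto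
  done

definition posA8 :: "nat \<Rightarrow> nat \<Rightarrow> int list" where
  "posA8 T k = [(0), (-int k - 2 * int T - 4), (int T), (-2 * int k + 3 * int T + 5), (-int k + 9 * int T + 9), (-2 * int k + 7 * int T + 5), (-int k + 10 * int T + 9)]"

definition posB8 :: "nat \<Rightarrow> nat \<Rightarrow> int list" where
  "posB8 T k = [(0), (-int k - 5 * int T - 4), (-int T), (-2 * int k - int T - 3), (-3 * int k - 7 * int T - 7), (-int k - 7 * int T - 3), (-2 * int k - 12 * int T - 7)]"

definition posX8 :: "int list" where
  "posX8 = [(0), (1), (-2), (-1), (2), (6), (4)]"

definition posI8 :: "nat \<Rightarrow> int list" where
  "posI8 T = [(-14 * int T - 8), (0), (0), (2), (-7 * int T - 3), (3), (-7 * int T - 2)]"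

definition plc8 :: "idx \<Rightarrow> nat list" where
  "plc8 \<beta> = (case \<beta> of IA k \<Rightarrow> [1, 4, 0, 6, 2, 3, 5] | IB k \<Rightarrow> [4, 3, 0, 6, 1, 5, 2] | IX \<Rightarrow> [1, 3, 0, 4, 5, 2, 6] | IInf \<Rightarrow> [0, 0, 0, 1, 3, 2, 4])"

definition pos8 :: "nat \<Rightarrow> idx \<Rightarrow> nat \<Rightarrow> int" where
  "pos8 T \<beta> j = (case \<beta> of IA k \<Rightarrow> posA8 T k ! j | IB k \<Rightarrow> posB8 T k ! j | IX \<Rightarrow> posX8 ! j | IInf \<Rightarrow> posI8 T ! j)"

definition sv8 :: "nat \<Rightarrow> idx \<Rightarrow> nat \<times> nat \<Rightarrow> int" where
  "sv8 T \<beta> ab = val4 T \<beta> (plc8 \<beta> ! edge ab)"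

definition Arcs8 :: "nat \<Rightarrow> (idx \<times> (nat \<times> nat)) set" where
  "Arcs8 T = (Iset T - {IInf}) \<times> set (D_pattern 8) \<union> {IInf} \<times> {(a,b). (a,b) \<in> set (D_pattern 8) \<and> a \<noteq> 1 \<and> b \<noteq> 1}"

lemma Sp8: "{(a,b). (a,b) \<in> set (D_pattern 8) \<and> a \<noteq> 1 \<and> b \<noteq> 1} = set [(2,3), (4,3), (4,5), (5,6), (6,0)]"
  by auto

lemma injA8: "Suc 0 \<le> k \<Longrightarrow> k \<le> T \<Longrightarrow> inj_on (\<lambda>j. posA8 T k ! j mod (14 * int T + 13)) {0..6}"
  by (rule inj_mod_small) (simp add: set07 posA8_def abs_less_iff)

lemma injB8: "Suc 0 \<le> k \<Longrightarrow> k \<le> T \<Longrightarrow> inj_on (\<lambda>j. posB8 T k ! j mod (14 * int T + 13)) {0..6}"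
  by (rule inj_mod_small) (simp add: set07 posB8_def abs_less_iff)

lemma injX8: "inj_on (\<lambda>j. posX8 ! j mod (14 * int T + 13)) {0..6}"
  by (rule inj_mod_small) (simp add: set07 posX8_def abs_less_iff)

lemma injI8: "inj_on (\<lambda>j. posI8 T ! j mod (14 * int T + 13)) ({0..6} - {1})"
proof -
  have e: "{0..6::nat} - {1} = {0,2,3,4,5,6}" by auto
  show ?thesis unfolding e by (rule inj_mod_small) (simp add: posI8_def abs_less_iff)
qed

lemma smA8: "(a,b) \<in> set (D_pattern 8) \<Longrightarrow> (posA8 T k ! b - posA8 T k ! a) mod (14 * int T + 13) = valA4 T k ! (plc8 (IA k) ! edge (a,b)) mod (14 * int T + 13)"
  by (rule modeq_intro) (auto simp: posA8_def valA4_def plc8_def edge_def)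

lemma smB8: "(a,b) \<in> set (D_pattern 8) \<Longrightarrow> (posB8 T k ! b - posB8 T k ! a) mod (14 * int T + 13) = valB4 T k ! (plc8 (IB k) ! edge (a,b)) mod (14 * int T + 13)"
  by (rule modeq_intro) (auto simp: posB8_def valB4_def plc8_def edge_def)

lemma smX8: "(a,b) \<in> set (D_pattern 8) \<Longrightarrow> (posX8 ! b - posX8 ! a) mod (14 * int T + 13) = valX ! (plc8 IX ! edge (a,b)) mod (14 * int T + 13)"
  by (rule modeq_intro) (auto simp: posX8_def valX_def plc8_def edge_def)

lemma smI8: "(a,b) \<in> set [(2,3), (4,3), (4,5), (5,6), (6,0)] \<Longrightarrow> (posI8 T ! b - posI8 T ! a) mod (14 * int T + 13) = valI T ! (plc8 IInf ! edge (a,b)) mod (14 * int T + 13)"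
  by (rule modeq_intro) (auto simp: posI8_def valI_def plc8_def edge_def)

lemma jmem8: "(\<beta>,ab) \<in> Arcs8 T \<Longrightarrow> (\<beta>, plc8 \<beta> ! edge ab) \<in> Jset T"
  unfolding Arcs8_def Sp8 by (auto simp: Jset_def Iset_def plc8_def edge_def)

lemma ginj8: "(\<beta>,ab) \<in> Arcs8 T \<Longrightarrow> (\<beta>,ab') \<in> Arcs8 T \<Longrightarrow> plc8 \<beta> ! edge ab = plc8 \<beta> ! edge ab' \<Longrightarrow> ab = ab'"
  unfolding Arcs8_def Sp8 by (auto simp: Iset_def plc8_def edge_def)

lemma frame8: "frame 8 (14 * T + 13) (Iset T) IInf 1 (pos8 T) (sv8 T) (Arcs8 T)"
  apply unfold_locales
  subgoal by simp
  subgoal by auto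
  subgoal by (simp add: Iset_def)
  subgoal by simp
  subgoal by auto
  subgoal by auto
  subgoal by (rule finite_Iset)
  subgoal for \<beta> by (auto simp: Iset_def pos8_def injA8 injB8 injX8)
  subgoal using injI8[of T] by (simp add: pos8_def)
  subgoal by (simp add: Arcs8_def)
  subgoal for \<beta> a b unfolding Arcs8_def Sp8 by (auto simp: Iset_def pos8_def sv8_def val4_def smA8 smB8 smX8 smI8)
  subgoal for \<beta> ab using jmem8[of \<beta> ab T] val4_bd[of \<beta> _ T] by (simp add: sv8_def)
  subgoal for \<beta> ab using jmem8[of \<beta> ab T] val4_bd[of \<beta> _ T] by (simp add: sv8_def)
  subgoal unfolding sv8_def apply (rule inj_comp[OF val4_inj]) apply (erule jmem8) using ginj8 by blast
  subgoal unfolding Arcs8_def Sp8 by (rule card_arcs) auto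
  done



theorem lemma3p2:
  fixes i v :: nat
  assumes "i \<in> {1..8}" and "v > 0" and "v mod 14 = 0"
  shows "\<exists>\<D> :: (nat \<times> nat) set set. is_D_decomposition i {0..<v} \<D>"
proof -
  have "\<exists>T. v = Suc (14 * T + 13)" using assms(2,3) by presburger
  then obtain T where vT: "v = Suc (14 * T + 13)" by blast
  have "i = 1 \<or> i = 2 \<or> i = 3 \<or> i = 4 \<or> i = 5 \<or> i = 6 \<or> i = 7 \<or> i = 8" using assms(1) by auto
  thus ?thesis unfolding vT
    using frame.decomp[OF frame1[of T]] frame.decomp[OF frame2[of T]] frame.decomp[OF frame3[of T]]
      frame.decomp[OF frame4[of T]] frame.decomp[OF frame5[of T]] frame.decomp[OF frame6[of T]]
      frame.decomp[OF frame7[of T]] frame.decomp[OF frame8[of T]] by blast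
qed

end
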